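(* Consider a sequence of finite populations indexed by $n\to\infty$, each satisfying Assumption 1, Assumption 2 and the null hypothesis $H_0:\ T_i(1)=T_i(0)$ for all $i$, and suppose Condition 2 holds; condition on all potential event times. For each $1\le k\le K$: (i) if the limits of $d_k/n$, $G_1(t_k)$ and $G_0(t_k)$ are all positive and the limit of $h_k$ is less than $1$, then $$\frac{\mathbb{E}(V_k\mid\boldsymbol{T}(1),\boldsymbol{T}(0))}{n}=g_k\phi_k(1-\phi_k)\frac{n_k}{n}h_k(1-h_k)+o(1)\quad\text{and}\quad\frac{V_k}{n}=\frac{\mathbb{E}(V_k\mid\boldsymbol{T}(1),\boldsymbol{T}(0))}{n}+o_{\Pr}(1);$$ (ii) otherwise (at least one of these three limits is zero, or all three are positive but $\lim h_k=1$), $\mathbb{E}(V_k\mid\boldsymbol{T}(1),\boldsymbol{T}(0))/n=o(1)$ and $V_k/n=o_{\Pr}(1)$.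
   Context: Unit $i$ ($1\le i\le n$) has potential event times $T_i(1),T_i(0)\ge 0$ (fixed constants), potential censoring times $C_i(1),C_i(0)\in[0,\infty]$, treatment indicator $Z_i\in\{0,1\}$; bold letters denote $n$-vectors. Assumption 1: conditional on all potential event and censoring times, the $Z_i$ are i.i.d. Bernoulli$(p_1)$, $p_1=1-p_0\in(0,1)$. Assumption 2: $(\boldsymbol{C}(1),\boldsymbol{C}(0))$ is independent of $(\boldsymbol{T}(1),\boldsymbol{T}(0))$ and the pairs $(C_i(1),C_i(0))$ are i.i.d. across $i$. $G_z(c)=\Pr(C_i(z)\ge c)$, $G(t)=p_1G_1(t)+p_0G_0(t)$. Realized: $W_i=\min\{T_i,C_i\}$, $\Delta_i=\mathbb{1}(T_i\le C_i)$ with $T_i=Z_iT_i(1)+(1-Z_i)T_i(0)$, $C_i=Z_iC_i(1)+(1-Z_i)C_i(0)$. Let $t_1<\dots<t_K$ be the distinct values of $\{T_i(0)\}$, $d_k=\#\{i:T_i(0)=t_k\}$, $n_k=\#\{i:T_i(0)\ge t_k\}$, $h_k=d_k/n_k$, $g_k=G(t_k)$, $\phi_k=p_1G_1(t_k)/G(t_k)$; $N_{1k},N_{0k}$ the numbers of treated / control units with $W_i\ge t_k$, $N_k=N_{1k}+N_{0k}$, $D_k=\sum_i\Delta_i\mathbb{1}(W_i=t_k)$, $V_k=D_k(N_k-D_k)N_{1k}N_{0k}/\{N_k^2(N_k-1)\}$ (convention $0/0:=0$). Quantities may depend on $n$. Condition 2: as $n\to\infty$, $K$ is fixed, and for $z=0,1$,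 $1\le k\le K$: $p_z$ has a positive limit; $d_k/n$ has a limit; $G_z(t_k)$ has a limit; and for at least one $k$, $d_k/n$, $G_1(t_k)$, $G_0(t_k)$ have positive limits and $\lim h_k<1$. *)

theory Defs
  imports "HOL-Probability.Probability"
begin

text \<open>Population n has units 0..n-1.  Under H0 the potential event times coincide,
  T n i = T_i(1) = T_i(0) (fixed constants).  Cd n is the common law of the pair
  (C_i(1), C_i(0)) with values in [0,\<infinity>] (ennreal).  p n is p_1.
  Distinct event-time values are indexed 0..K-1 (paper: 1..K).\<close>

definition tpt :: "(nat \<Rightarrow> nat \<Rightarrow> real) \<Rightarrow> nat \<Rightarrow> nat \<Rightarrow> real" where
  "tpt T n k = sorted_list_of_set (T n ` {..<n}) ! k"

definition Kn :: "(nat \<Rightarrow> nat \<Rightarrow> real) \<Rightarrow> nat \<Rightarrow> nat" where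
  "Kn T n = card (T n ` {..<n})"

definition dk :: "(nat \<Rightarrow> nat \<Rightarrow> real) \<Rightarrow> nat \<Rightarrow> nat \<Rightarrow> nat" where
  "dk T n k = card {i. i < n \<and> T n i = tpt T n k}"

definition nk :: "(nat \<Rightarrow> nat \<Rightarrow> real) \<Rightarrow> nat \<Rightarrow> nat \<Rightarrow> nat" where
  "nk T n k = card {i. i < n \<and> T n i \<ge> tpt T n k}"

definition hk :: "(nat \<Rightarrow> nat \<Rightarrow> real) \<Rightarrow> nat \<Rightarrow> nat \<Rightarrow> real" where
  "hk T n k = real (dk T n k) / real (nk T n k)"

text \<open>G_z(c) = Pr(C_i(z) \<ge> c); z = True means treatment 1 (first component).\<close>
definition Gz :: "(nat \<Rightarrow> (ennreal \<times> ennreal) measure) \<Rightarrow> nat \<Rightarrow> bool \<Rightarrow> real \<Rightarrow> real" where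
  "Gz Cd n z c = measure (Cd n) {x \<in> space (Cd n). ennreal c \<le> (if z then fst x else snd x)}"

definition Gmix :: "(nat \<Rightarrow> real) \<Rightarrow> (nat \<Rightarrow> (ennreal \<times> ennreal) measure) \<Rightarrow> nat \<Rightarrow> real \<Rightarrow> real" where
  "Gmix p Cd n c = p n * Gz Cd n True c + (1 - p n) * Gz Cd n False c"

definition gk where
  "gk p Cd T n k = Gmix p Cd n (tpt T n k)"

definition phik where
  "phik p Cd T n k = p n * Gz Cd n True (tpt T n k) / Gmix p Cd n (tpt T n k)"

text \<open>Probability space of population n: unit i carries (Z_i, (C_i(1), C_i(0))),
  independent across units, Z_i ~ Bernoulli(p_1) independent of the censoring pair
  (Assumptions 1 and 2, conditional on the potential event times).\<close>
definition popM :: "(nat \<Rightarrow> real) \<Rightarrow> (nat \<Rightarrow> (ennreal \<times> ennreal) measure) \<Rightarrow> nat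
    \<Rightarrow> (nat \<Rightarrow> bool \<times> ennreal \<times> ennreal) measure" where
  "popM p Cd n = PiM {..<n} (\<lambda>_. measure_pmf (bernoulli_pmf (p n)) \<Otimes>\<^sub>M Cd n)"

definition Zr :: "(nat \<Rightarrow> bool \<times> ennreal \<times> ennreal) \<Rightarrow> nat \<Rightarrow> bool" where
  "Zr \<omega> i = fst (\<omega> i)"

definition Cr :: "(nat \<Rightarrow> bool \<times> ennreal \<times> ennreal) \<Rightarrow> nat \<Rightarrow> ennreal" where
  "Cr \<omega> i = (if Zr \<omega> i then fst (snd (\<omega> i)) else snd (snd (\<omega> i)))"

definition Wr where
  "Wr T n \<omega> i = min (ennreal (T n i)) (Cr \<omega> i)"

definition Deltar where
  "Deltar T n \<omega> i = (ennreal (T n i) \<le> Cr \<omega> i)"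

definition N1k where
  "N1k T n k \<omega> = card {i. i < n \<and> Zr \<omega> i \<and> ennreal (tpt T n k) \<le> Wr T n \<omega> i}"

definition N0k where
  "N0k T n k \<omega> = card {i. i < n \<and> \<not> Zr \<omega> i \<and> ennreal (tpt T n k) \<le> Wr T n \<omega> i}"

definition Nk where
  "Nk T n k \<omega> = N1k T n k \<omega> + N0k T n k \<omega>"

definition Dk where
  "Dk T n k \<omega> = card {i. i < n \<and> Deltar T n \<omega> i \<and> Wr T n \<omega> i = ennreal (tpt T n k)}"

text \<open>Division by zero yields 0 in Isabelle, matching the convention 0/0 := 0.\<close>
definition Vk :: "(nat \<Rightarrow> nat \<Rightarrow> real) \<Rightarrow> nat \<Rightarrow> nat \<Rightarrow> (nat \<Rightarrow> bool \<times> ennreal \<times> ennreal) \<Rightarrow> real" where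
  "Vk T n k \<omega> = real (Dk T n k \<omega>) * (real (Nk T n k \<omega>) - real (Dk T n k \<omega>))
      * real (N1k T n k \<omega>) * real (N0k T n k \<omega>)
      / ((real (Nk T n k \<omega>))\<^sup>2 * (real (Nk T n k \<omega>) - 1))"

end

theory Submission
  imports Defs
begin


lemma indep_coords:
  assumes fin: "finite I" and M: "\<And>i. i \<in> I \<Longrightarrow> prob_space (M i)"
  shows "prob_space.indep_vars (PiM I M) M (\<lambda>i \<omega>. \<omega> i) I"
proof -
  interpret P: prob_space "PiM I M" by (rule prob_space_PiM) (rule M)
  show ?thesis
  proof (cases "I = {}")
    case True
    show ?thesis
      by (subst P.indep_vars_def, subst P.indep_sets_def) (simp_all add: True)
  next
    case False
    show ?thesis
    proof (subst P.indep_vars_iff_distr_eq_PiM'[OF False])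
      show "(\<lambda>\<omega>. \<omega> i) \<in> measurable (PiM I M) (M i)" if "i \<in> I" for i
        using that by (rule measurable_component_singleton)
      have "distr (PiM I M) (PiM I M) (\<lambda>x. restrict x I) = distr (PiM I M) (PiM I M) (\<lambda>x. x)"
        by (rule distr_cong) (auto simp: space_PiM)
      also have "\<dots> = PiM I M" by simp
      also have "\<dots> = PiM I (\<lambda>i. distr (PiM I M) (M i) (\<lambda>\<omega>. \<omega> i))"
        by (rule PiM_cong) (auto simp: distr_PiM_component M)
      finally show "distr (PiM I M) (PiM I M) (\<lambda>x. restrict x I) = PiM I (\<lambda>i. distr (PiM I M) (M i) (\<lambda>\<omega>. \<omega> i))" .
    qed
  qed
qed

lemma integral_coord:
  fixes g :: "'a \<Rightarrow> real"
  assumes M0: "prob_space M0" and i: "i < n" and g: "g \<in> borel_measurable M0"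
  shows "integral\<^sup>L (PiM {..<n} (\<lambda>_. M0)) (\<lambda>\<omega>. g (\<omega> i)) = integral\<^sup>L M0 g"
proof -
  have "integral\<^sup>L (PiM {..<n} (\<lambda>_. M0)) (\<lambda>\<omega>. g (\<omega> i))
      = integral\<^sup>L (distr (PiM {..<n} (\<lambda>_. M0)) M0 (\<lambda>\<omega>. \<omega> i)) g"
    by (rule integral_distr[symmetric]) (use i g in auto)
  also have "distr (PiM {..<n} (\<lambda>_. M0)) M0 (\<lambda>\<omega>. \<omega> i) = M0"
    using i M0 by (intro distr_PiM_component) auto
  finally show ?thesis .
qed

lemma hoeff_PiM:
  fixes f :: "nat \<Rightarrow> 'a \<Rightarrow> real"
  assumes M0: "prob_space M0" and fm: "\<And>i. f i \<in> borel_measurable M0"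
    and bnd: "\<And>i x. x \<in> space M0 \<Longrightarrow> 0 \<le> f i x \<and> f i x \<le> 1"
    and n: "n > 0" and eps: "\<epsilon> \<ge> 0"
  shows "measure (PiM {..<n} (\<lambda>_. M0)) {\<omega> \<in> space (PiM {..<n} (\<lambda>_. M0)).
      \<bar>(\<Sum>i<n. f i (\<omega> i)) - (\<Sum>i<n. integral\<^sup>L M0 (f i))\<bar> \<ge> \<epsilon>} \<le> 2 * exp (-2 * \<epsilon>\<^sup>2 / real n)"
proof -
  let ?P = "PiM {..<n} (\<lambda>_. M0)"
  interpret P: prob_space ?P by (rule prob_space_PiM) (rule M0)
  have ind: "P.indep_vars (\<lambda>_. M0) (\<lambda>i \<omega>. \<omega> i) {..<n}"
    by (rule indep_coords) (auto simp: M0)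
  interpret H: Hoeffding_ineq ?P "{..<n}" "\<lambda>i \<omega>. f i (\<omega> i)" "\<lambda>_. 0" "\<lambda>_. 1"
     "\<Sum>i<n. P.expectation (\<lambda>\<omega>. f i (\<omega> i))"
  proof unfold_locales
    show "P.indep_vars (\<lambda>_. borel) (\<lambda>i \<omega>. f i (\<omega> i)) {..<n}"
      by (rule P.indep_vars_compose2[OF ind]) (use fm in auto)
    show "AE x in ?P. f i (x i) \<in> {0..1}" if "i \<in> {..<n}" for i
      using that by (intro AE_PiM_component M0) (auto intro!: AE_I2 dest: bnd)
  qed auto
  have "P.prob {\<omega> \<in> space ?P. \<bar>(\<Sum>i<n. f i (\<omega> i)) - (\<Sum>i<n. P.expectation (\<lambda>\<omega>. f i (\<omega> i)))\<bar> \<ge> \<epsilon>}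
     \<le> 2 * exp (-2 * \<epsilon>\<^sup>2 / (\<Sum>i<n. (1 - 0)\<^sup>2))"
    by (rule H.Hoeffding_ineq_abs_ge[OF eps]) (use n in simp)
  moreover have "(\<Sum>i<n. P.expectation (\<lambda>\<omega>. f i (\<omega> i))) = (\<Sum>i<n. integral\<^sup>L M0 (f i))"
    by (intro sum.cong refl integral_coord M0 fm) auto
  ultimately show ?thesis by simp
qed


definition cip :: "(nat \<Rightarrow> 'a measure) \<Rightarrow> (nat \<Rightarrow> 'a \<Rightarrow> real) \<Rightarrow> (nat \<Rightarrow> real) \<Rightarrow> bool" where
  "cip M Y c \<longleftrightarrow> (\<forall>\<epsilon>>0. (\<lambda>n. measure (M n) {\<omega> \<in> space (M n). \<bar>Y n \<omega> - c n\<bar> > \<epsilon>}) \<longlonglongrightarrow> 0)"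

lemma cip3:
  assumes meas1: "\<And>n. X1 n \<in> borel_measurable (M n)"
    and meas2: "\<And>n. X2 n \<in> borel_measurable (M n)"
    and meas3: "\<And>n. X3 n \<in> borel_measurable (M n)"
    and measY: "\<And>n. Y n \<in> borel_measurable (M n)"
    and prob: "\<And>n. prob_space (M n)"
    and c1: "cip M X1 b1" and c2: "cip M X2 b2" and c3: "cip M X3 b3"
    and key: "\<And>\<epsilon>. \<epsilon> > 0 \<Longrightarrow> \<exists>\<delta>>0. eventually (\<lambda>n. \<forall>\<omega>\<in>space (M n). \<bar>Y n \<omega> - c n\<bar> > \<epsilon> \<longrightarrow>
          (\<bar>X1 n \<omega> - b1 n\<bar> > \<delta> \<or> \<bar>X2 n \<omega> - b2 n\<bar> > \<delta> \<or> \<bar>X3 n \<omega> - b3 n\<bar> > \<delta>)) sequentially"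
  shows "cip M Y c"
  unfolding cip_def
proof (intro allI impI)
  fix \<epsilon> :: real assume e: "\<epsilon> > 0"
  obtain \<delta> where d: "\<delta> > 0" and ev: "eventually (\<lambda>n. \<forall>\<omega>\<in>space (M n). \<bar>Y n \<omega> - c n\<bar> > \<epsilon> \<longrightarrow>
          (\<bar>X1 n \<omega> - b1 n\<bar> > \<delta> \<or> \<bar>X2 n \<omega> - b2 n\<bar> > \<delta> \<or> \<bar>X3 n \<omega> - b3 n\<bar> > \<delta>)) sequentially"
    using key[OF e] by blast
  define A1 where "A1 n = {\<omega> \<in> space (M n). \<bar>X1 n \<omega> - b1 n\<bar> > \<delta>}" for n
  define A2 where "A2 n = {\<omega> \<in> space (M n). \<bar>X2 n \<omega> - b2 n\<bar> > \<delta>}" for n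
  define A3 where "A3 n = {\<omega> \<in> space (M n). \<bar>X3 n \<omega> - b3 n\<bar> > \<delta>}" for n
  have t: "(\<lambda>n. measure (M n) (A1 n) + measure (M n) (A2 n) + measure (M n) (A3 n)) \<longlonglongrightarrow> 0 + 0 + 0"
    using c1 c2 c3 d unfolding cip_def A1_def A2_def A3_def by (intro tendsto_add) auto
  show "(\<lambda>n. measure (M n) {\<omega> \<in> space (M n). \<bar>Y n \<omega> - c n\<bar> > \<epsilon>}) \<longlonglongrightarrow> 0"
  proof (rule tendsto_sandwich[of "\<lambda>_. 0" _ _ "\<lambda>n. measure (M n) (A1 n) + measure (M n) (A2 n) + measure (M n) (A3 n)"])
    show "eventually (\<lambda>n. 0 \<le> measure (M n) {\<omega> \<in> space (M n). \<bar>Y n \<omega> - c n\<bar> > \<epsilon>}) sequentially"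
      by simp
    show "eventually (\<lambda>n. measure (M n) {\<omega> \<in> space (M n). \<bar>Y n \<omega> - c n\<bar> > \<epsilon>}
          \<le> measure (M n) (A1 n) + measure (M n) (A2 n) + measure (M n) (A3 n)) sequentially"
      using ev
    proof eventually_elim
      case (elim n)
      interpret prob_space "M n" by (rule prob)
      have s1: "A1 n \<in> sets (M n)" "A2 n \<in> sets (M n)" "A3 n \<in> sets (M n)"
        unfolding A1_def A2_def A3_def using meas1[of n] meas2[of n] meas3[of n] by measurable
      have "measure (M n) {\<omega> \<in> space (M n). \<bar>Y n \<omega> - c n\<bar> > \<epsilon>} \<le> measure (M n) (A1 n \<union> A2 n \<union> A3 n)"
        by (rule finite_measure_mono) (use elim s1 in \<open>auto simp: A1_def A2_def A3_def\<close>)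
      also have "\<dots> \<le> measure (M n) (A1 n \<union> A2 n) + measure (M n) (A3 n)"
        using s1 by (intro measure_Un_le) auto
      also have "measure (M n) (A1 n \<union> A2 n) \<le> measure (M n) (A1 n) + measure (M n) (A2 n)"
        using s1 by (intro measure_Un_le) auto
      finally show ?case by simp
    qed
  qed (use t in auto)
qed

lemma cip_det:
  assumes ev: "eventually (\<lambda>n. \<forall>\<omega>\<in>space (M n). \<bar>Y n \<omega> - c n\<bar> \<le> e n) sequentially"
    and e: "e \<longlonglongrightarrow> 0"
  shows "cip M Y c"
  unfolding cip_def
proof (intro allI impI)
  fix \<epsilon> :: real assume eps: "\<epsilon> > 0"
  have "eventually (\<lambda>n. e n < \<epsilon>) sequentially"
    using e eps by (auto simp: tendsto_iff dist_real_def dest!: spec[of _ \<epsilon>] elim: eventually_mono)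
  with ev have "eventually (\<lambda>n. measure (M n) {\<omega> \<in> space (M n). \<bar>Y n \<omega> - c n\<bar> > \<epsilon>} = 0) sequentially"
  proof eventually_elim
    case (elim n)
    then have E: "{\<omega> \<in> space (M n). \<bar>Y n \<omega> - c n\<bar> > \<epsilon>} = {}" by force
    show ?case unfolding E by simp
  qed
  then show "(\<lambda>n. measure (M n) {\<omega> \<in> space (M n). \<bar>Y n \<omega> - c n\<bar> > \<epsilon>}) \<longlonglongrightarrow> 0"
    by (rule tendsto_eventually)
qed

lemma cip_expect:
  assumes measY: "\<And>n. Y n \<in> borel_measurable (M n)"
    and prob: "\<And>n. prob_space (M n)"
    and bY: "\<And>n \<omega>. \<omega> \<in> space (M n) \<Longrightarrow> \<bar>Y n \<omega>\<bar> \<le> B"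
    and bc: "\<And>n. \<bar>c n\<bar> \<le> B"
    and ci: "cip M Y c"
  shows "(\<lambda>n. integral\<^sup>L (M n) (Y n) - c n) \<longlonglongrightarrow> 0"
  unfolding tendsto_iff dist_real_def
proof (intro allI impI)
  fix e :: real assume e: "e > 0"
  have B0: "0 \<le> B" using bc[of 0] by simp
  define r where "r = e / (2 * (2 * B + 1))"
  have r: "r > 0" using e B0 by (simp add: r_def)
  have "eventually (\<lambda>n. measure (M n) {\<omega> \<in> space (M n). \<bar>Y n \<omega> - c n\<bar> > e/2} < r) sequentially"
  proof -
    have "(\<lambda>n. measure (M n) {\<omega> \<in> space (M n). \<bar>Y n \<omega> - c n\<bar> > e/2}) \<longlonglongrightarrow> 0"
      by (rule ci[unfolded cip_def, rule_format]) (use e in simp)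
    from tendstoD[OF this r] show ?thesis by (simp add: dist_real_def)
  qed
  then show "eventually (\<lambda>n. \<bar>integral\<^sup>L (M n) (Y n) - c n - 0\<bar> < e) sequentially"
  proof eventually_elim
    case (elim n)
    interpret prob_space "M n" by (rule prob)
    define A where "A = {\<omega> \<in> space (M n). \<bar>Y n \<omega> - c n\<bar> > e/2}"
    have A: "A \<in> sets (M n)" unfolding A_def using measY[of n] by measurable
    have intY: "integrable (M n) (Y n)"
      by (rule integrable_const_bound[where B=B]) (use bY measY in auto)
    have "\<bar>integral\<^sup>L (M n) (Y n) - c n\<bar> = \<bar>integral\<^sup>L (M n) (\<lambda>\<omega>. Y n \<omega> - c n)\<bar>"
      using intY by (simp add: prob_space)
    also have "\<dots> \<le> integral\<^sup>L (M n) (\<lambda>\<omega>. \<bar>Y n \<omega> - c n\<bar>)"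
      by (rule integral_abs_bound)
    also have "\<dots> \<le> integral\<^sup>L (M n) (\<lambda>\<omega>. e/2 + (2*B) * indicator A \<omega>)"
    proof (rule integral_mono)
      show "integrable (M n) (\<lambda>\<omega>. \<bar>Y n \<omega> - c n\<bar>)" using intY by auto
      show "integrable (M n) (\<lambda>\<omega>. e/2 + (2*B) * indicator A \<omega>)"
        using A by (intro Bochner_Integration.integrable_add integrable_mult_right integrable_real_indicator) (auto simp: emeasure_eq_measure)
      fix \<omega> assume w: "\<omega> \<in> space (M n)"
      show "\<bar>Y n \<omega> - c n\<bar> \<le> e/2 + (2*B) * indicator A \<omega>"
      proof (cases "\<omega> \<in> A")
        case True
        have "\<bar>Y n \<omega> - c n\<bar> \<le> 2 * B" using bY[OF w] bc[of n] by linarith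
        then show ?thesis using True e by simp
      next
        case False then show ?thesis using w B0 by (simp add: A_def)
      qed
    qed
    also have "\<dots> = e/2 + 2 * B * measure (M n) A"
      using A by (subst Bochner_Integration.integral_add) (auto simp: prob_space emeasure_eq_measure)
    also have "\<dots> < e"
    proof -
      have "2 * B * measure (M n) A \<le> 2 * B * r"
        using elim B0 unfolding A_def by (intro mult_left_mono) auto
      also have "2 * B * r < e / 2"
        using e B0 unfolding r_def by (simp add: field_simps)
      finally show ?thesis by simp
    qed
    finally show ?case by simp
  qed
qed


lemma V_bound:
  fixes D N1 N0 :: nat
  assumes DN: "D \<le> N1 + N0"
  defines "V \<equiv> real D * (real (N1 + N0) - real D) * real N1 * real N0
      / ((real (N1 + N0))\<^sup>2 * (real (N1 + N0) - 1))"
  shows "0 \<le> V \<and> V \<le> real D \<and> V \<le> real (N1 + N0) - real D \<and> V \<le> real N1 \<and> V \<le> real N0"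
proof (cases "N1 + N0 \<le> 1")
  case True
  then have "N1 + N0 = 0 \<or> N1 + N0 = 1" by linarith
  then have "real (N1 + N0) = 0 \<or> real (N1 + N0) - 1 = 0" by auto
  then have "V = 0" unfolding V_def by auto
  then show ?thesis using DN True by auto
next
  case False
  define N where "N = real (N1 + N0)"
  have N2: "N \<ge> 2" using False by (simp add: N_def)
  define A where "A = real D * (N - real D) / (N - 1)"
  define B where "B = real N1 * real N0 / N\<^sup>2"
  have V: "V = A * B" unfolding V_def A_def B_def N_def[symmetric] by (simp add: field_simps)
  have DN': "real D \<le> N" using DN by (simp add: N_def)
  have A0: "0 \<le> A" using DN' N2 by (simp add: A_def)
  have AD: "A \<le> real D"
  proof (cases "D = 0")
    case False
    then have "N - real D \<le> N - 1" by simp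
    then have "real D * (N - real D) \<le> real D * (N - 1)" by (intro mult_left_mono) auto
    then show ?thesis using N2 by (simp add: A_def field_simps)
  qed (simp add: A_def)
  have AND: "A \<le> N - real D"
  proof (cases "real D = N")
    case False
    then have "D \<noteq> N1 + N0" by (auto simp: N_def)
    then have "D + 1 \<le> N1 + N0" using DN by linarith
    then have "real D \<le> N - 1" by (simp add: N_def)
    then have "real D * (N - real D) \<le> (N - 1) * (N - real D)" using DN' by (intro mult_right_mono) auto
    then show ?thesis using N2 by (simp add: A_def field_simps)
  qed (simp add: A_def)
  have AN: "A \<le> N" using AD DN' by linarith
  have B0: "0 \<le> B" by (simp add: B_def)
  have B1: "B \<le> real N1 / N"
  proof -
    have "real N1 * real N0 \<le> real N1 * N" by (intro mult_left_mono) (auto simp: N_def)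
    then show ?thesis using N2 by (simp add: B_def field_simps power2_eq_square)
  qed
  have B2: "B \<le> real N0 / N"
  proof -
    have "real N1 * real N0 \<le> N * real N0" by (intro mult_right_mono) (auto simp: N_def)
    then show ?thesis using N2 by (simp add: B_def field_simps power2_eq_square)
  qed
  have Ble1: "B \<le> 1"
  proof -
    have "real N1 / N \<le> 1" using N2 by (simp add: N_def)
    then show ?thesis using B1 by linarith
  qed
  have "A * B \<le> A" using A0 Ble1 by (simp add: mult_left_le)
  moreover have "A * B \<le> N * (real N1 / N)" using A0 B0 AN B1 by (intro mult_mono) auto
  moreover have "A * B \<le> N * (real N0 / N)" using A0 B0 AN B2 by (intro mult_mono) auto
  ultimately show ?thesis using A0 B0 AD AND N2 unfolding V N_def[symmetric] by auto
qed


definition Cx :: "bool \<times> ennreal \<times> ennreal \<Rightarrow> ennreal" where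
  "Cx x = (if fst x then fst (snd x) else snd (snd x))"

definition fD :: "(nat \<Rightarrow> real) \<Rightarrow> real \<Rightarrow> nat \<Rightarrow> bool \<times> ennreal \<times> ennreal \<Rightarrow> real" where
  "fD Tn t i x = (if ennreal (Tn i) \<le> Cx x \<and> min (ennreal (Tn i)) (Cx x) = ennreal t then 1 else 0)"
definition f1 :: "(nat \<Rightarrow> real) \<Rightarrow> real \<Rightarrow> nat \<Rightarrow> bool \<times> ennreal \<times> ennreal \<Rightarrow> real" where
  "f1 Tn t i x = (if fst x \<and> ennreal t \<le> min (ennreal (Tn i)) (Cx x) then 1 else 0)"
definition f0 :: "(nat \<Rightarrow> real) \<Rightarrow> real \<Rightarrow> nat \<Rightarrow> bool \<times> ennreal \<times> ennreal \<Rightarrow> real" where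
  "f0 Tn t i x = (if \<not> fst x \<and> ennreal t \<le> min (ennreal (Tn i)) (Cx x) then 1 else 0)"

lemma card_sum: "real (card {i. i < (n::nat) \<and> P i}) = (\<Sum>i<n. if P i then 1 else 0)"
proof -
  have e: "{i \<in> {..<n}. P i} = {i. i < n \<and> P i}" by auto
  have "(\<Sum>i<n. if P i then 1 else (0::real)) = sum (\<lambda>_. 1) {i \<in> {..<n}. P i}"
    by (rule sum.inter_filter[symmetric]) simp
  then show ?thesis by (simp add: e)
qed

lemma Dk_sum: "real (Dk T n k \<omega>) = (\<Sum>i<n. fD (T n) (tpt T n k) i (\<omega> i))"
  unfolding Dk_def fD_def card_sum Deltar_def Wr_def Cr_def Cx_def Zr_def ..
lemma N1k_sum: "real (N1k T n k \<omega>) = (\<Sum>i<n. f1 (T n) (tpt T n k) i (\<omega> i))"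
  unfolding N1k_def f1_def card_sum Deltar_def Wr_def Cr_def Cx_def Zr_def ..
lemma N0k_sum: "real (N0k T n k \<omega>) = (\<Sum>i<n. f0 (T n) (tpt T n k) i (\<omega> i))"
  unfolding N0k_def f0_def card_sum Deltar_def Wr_def Cr_def Cx_def Zr_def ..

lemma sets_M0:
  assumes "sets Cdn = sets (borel \<Otimes>\<^sub>M borel)"
  shows "sets (measure_pmf (bernoulli_pmf q) \<Otimes>\<^sub>M Cdn) = sets (count_space UNIV \<Otimes>\<^sub>M (borel \<Otimes>\<^sub>M borel))"
  by (rule sets_pair_measure_cong) (simp_all add: sets_measure_pmf_count_space assms)

lemma meas_f:
  assumes "sets Cdn = sets (borel \<Otimes>\<^sub>M borel)"
  shows "fD Tn t i \<in> borel_measurable (measure_pmf (bernoulli_pmf q) \<Otimes>\<^sub>M Cdn)"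
    "f1 Tn t i \<in> borel_measurable (measure_pmf (bernoulli_pmf q) \<Otimes>\<^sub>M Cdn)"
    "f0 Tn t i \<in> borel_measurable (measure_pmf (bernoulli_pmf q) \<Otimes>\<^sub>M Cdn)"
  unfolding measurable_cong_sets[OF sets_M0[OF assms] refl] fD_def f1_def f0_def Cx_def
  by measurable

lemma measure_M0_times:
  assumes prob: "prob_space Cdn" and B: "B \<in> sets Cdn" and q: "0 \<le> q" "q \<le> 1"
  shows "measure (measure_pmf (bernoulli_pmf q) \<Otimes>\<^sub>M Cdn) ({b} \<times> B)
     = (if b then q else 1 - q) * measure Cdn B"
proof -
  interpret C: prob_space Cdn by (rule prob)
  interpret P: prob_space "measure_pmf (bernoulli_pmf q) \<Otimes>\<^sub>M Cdn"
    by (intro prob_space_pair measure_pmf.prob_space_axioms prob)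
  have "emeasure (measure_pmf (bernoulli_pmf q) \<Otimes>\<^sub>M Cdn) ({b} \<times> B)
     = emeasure (measure_pmf (bernoulli_pmf q)) {b} * emeasure Cdn B"
    by (rule C.emeasure_pair_measure_Times) (auto simp: B)
  also have "\<dots> = ennreal ((if b then q else 1 - q) * measure Cdn B)"
    using q by (cases b) (auto simp: C.emeasure_eq_measure measure_pmf.emeasure_eq_measure
        measure_pmf_single ennreal_mult)
  finally show ?thesis
    by (simp add: P.emeasure_eq_measure measure_nonneg q)
qed

lemma exp_f:
  assumes q: "0 \<le> q" "q \<le> 1" and prob: "prob_space Cdn"
    and sets: "sets Cdn = sets (borel \<Otimes>\<^sub>M borel)"
    and t: "0 \<le> t" and Ti: "0 \<le> Tn i"
  defines "M0 \<equiv> measure_pmf (bernoulli_pmf q) \<Otimes>\<^sub>M Cdn"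
    and "G1 \<equiv> measure Cdn {x \<in> space Cdn. ennreal t \<le> fst x}"
    and "G0 \<equiv> measure Cdn {x \<in> space Cdn. ennreal t \<le> snd x}"
  shows "integral\<^sup>L M0 (fD Tn t i) = (if Tn i = t then q * G1 + (1 - q) * G0 else 0)"
    "integral\<^sup>L M0 (f1 Tn t i) = (if t \<le> Tn i then q * G1 else 0)"
    "integral\<^sup>L M0 (f0 Tn t i) = (if t \<le> Tn i then (1 - q) * G0 else 0)"
proof -
  interpret C: prob_space Cdn by (rule prob)
  interpret P: prob_space M0 unfolding M0_def
    by (intro prob_space_pair measure_pmf.prob_space_axioms prob)
  define B1 where "B1 = {x \<in> space Cdn. ennreal t \<le> fst x}"
  define B0 where "B0 = {x \<in> space Cdn. ennreal t \<le> snd x}"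
  have B1s: "B1 \<in> sets Cdn" unfolding B1_def sets_eq_imp_space_eq[OF sets] sets by measurable
  have B0s: "B0 \<in> sets Cdn" unfolding B0_def sets_eq_imp_space_eq[OF sets] sets by measurable
  have sp: "space M0 = UNIV \<times> space Cdn" unfolding M0_def by (simp add: space_pair_measure)
  have m1: "measure M0 ({True} \<times> B1) = q * G1"
    unfolding M0_def G1_def B1_def[symmetric] by (subst measure_M0_times) (use prob B1s q in auto)
  have m0: "measure M0 ({False} \<times> B0) = (1 - q) * G0"
    unfolding M0_def G0_def B0_def[symmetric] by (subst measure_M0_times) (use prob B0s q in auto)
  have ss1: "{True} \<times> B1 \<in> sets M0" unfolding M0_def using B1s by auto
  have ss0: "{False} \<times> B0 \<in> sets M0" unfolding M0_def using B0s by auto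
  have tT: "ennreal t \<le> ennreal (Tn i) \<longleftrightarrow> t \<le> Tn i" using Ti by simp
  have tE: "ennreal (Tn i) = ennreal t \<longleftrightarrow> Tn i = t" using Ti t by (simp add: ennreal_inj)
  show "integral\<^sup>L M0 (fD Tn t i) = (if Tn i = t then q * G1 + (1 - q) * G0 else 0)"
  proof (cases "Tn i = t")
    case True
    have "integral\<^sup>L M0 (fD Tn t i) = integral\<^sup>L M0 (indicator ({True} \<times> B1 \<union> {False} \<times> B0))"
      by (rule Bochner_Integration.integral_cong[OF refl])
         (auto simp: sp fD_def Cx_def B1_def B0_def True split: if_splits)
    also have "\<dots> = measure M0 ({True} \<times> B1 \<union> {False} \<times> B0)"
      using ss1 ss0 by (simp add: Int_absorb2 sets.sets_into_space)
    also have "\<dots> = q * G1 + (1 - q) * G0"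
      using ss1 ss0 m1 m0 by (subst P.finite_measure_Union) auto
    finally show ?thesis using True by simp
  next
    case False
    have "integral\<^sup>L M0 (fD Tn t i) = integral\<^sup>L M0 (\<lambda>_. 0)"
      by (rule Bochner_Integration.integral_cong[OF refl])
         (use False tE in \<open>auto simp: fD_def min_def split: if_splits\<close>)
    then show ?thesis using False by simp
  qed
  show "integral\<^sup>L M0 (f1 Tn t i) = (if t \<le> Tn i then q * G1 else 0)"
  proof (cases "t \<le> Tn i")
    case True
    have "integral\<^sup>L M0 (f1 Tn t i) = integral\<^sup>L M0 (indicator ({True} \<times> B1))"
      by (rule Bochner_Integration.integral_cong[OF refl])
         (use True tT in \<open>auto simp: sp f1_def Cx_def B1_def split: if_splits\<close>)
    also have "\<dots> = q * G1"
      using ss1 m1 by (simp add: Int_absorb2 sets.sets_into_space)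
    finally show ?thesis using True by simp
  next
    case False
    have "integral\<^sup>L M0 (f1 Tn t i) = integral\<^sup>L M0 (\<lambda>_. 0)"
      by (rule Bochner_Integration.integral_cong[OF refl])
         (use False tT in \<open>auto simp: f1_def\<close>)
    then show ?thesis using False by simp
  qed
  show "integral\<^sup>L M0 (f0 Tn t i) = (if t \<le> Tn i then (1 - q) * G0 else 0)"
  proof (cases "t \<le> Tn i")
    case True
    have "integral\<^sup>L M0 (f0 Tn t i) = integral\<^sup>L M0 (indicator ({False} \<times> B0))"
      by (rule Bochner_Integration.integral_cong[OF refl])
         (use True tT in \<open>auto simp: sp f0_def Cx_def B0_def split: if_splits\<close>)
    also have "\<dots> = (1 - q) * G0"
      using ss0 m0 by (simp add: Int_absorb2 sets.sets_into_space)
    finally show ?thesis using True by simp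
  next
    case False
    have "integral\<^sup>L M0 (f0 Tn t i) = integral\<^sup>L M0 (\<lambda>_. 0)"
      by (rule Bochner_Integration.integral_cong[OF refl])
         (use False tT in \<open>auto simp: f0_def\<close>)
    then show ?thesis using False by simp
  qed
qed


lemma tpt_in:
  assumes "k < Kn T n"
  shows "tpt T n k \<in> T n ` {..<n}"
proof -
  let ?L = "sorted_list_of_set (T n ` {..<n})"
  have "length ?L = Kn T n" unfolding Kn_def by simp
  then have "?L ! k \<in> set ?L" using assms by (intro nth_mem) simp
  then show ?thesis unfolding tpt_def by (metis finite_imageI finite_lessThan set_sorted_list_of_set)
qed

lemma nk_sum:
  assumes k: "k < Kn T n"
  shows "nk T n k = (\<Sum>j\<in>{k..<Kn T n}. dk T n j)"
proof -
  let ?S = "T n ` {..<n}"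
  let ?L = "sorted_list_of_set ?S"
  have fin: "finite ?S" by simp
  have len: "length ?L = Kn T n" unfolding Kn_def by simp
  have st: "sorted_wrt (<) ?L" using strict_sorted_list_of_set by blast
  have so: "sorted ?L" by simp
  have di: "distinct ?L" by simp
  have setL: "set ?L = ?S" by simp
  have eq: "{i. i < n \<and> T n i \<ge> tpt T n k} = (\<Union>j\<in>{k..<Kn T n}. {i. i < n \<and> T n i = tpt T n j})"
  proof (intro equalityI subsetI)
    fix i assume "i \<in> {i. i < n \<and> T n i \<ge> tpt T n k}"
    then have i: "i < n" and ge: "T n i \<ge> ?L ! k" unfolding tpt_def by auto
    have "T n i \<in> set ?L" using i setL by auto
    then obtain j where j: "j < length ?L" and tj: "?L ! j = T n i" by (metis in_set_conv_nth)
    have "k \<le> j"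
    proof (rule ccontr)
      assume "\<not> k \<le> j"
      then have "?L ! j < ?L ! k" using sorted_wrt_nth_less[OF st, of j k] k len by auto
      then show False using ge tj by simp
    qed
    then show "i \<in> (\<Union>j\<in>{k..<Kn T n}. {i. i < n \<and> T n i = tpt T n j})"
    proof -
      have "j \<in> {k..<Kn T n}" using \<open>k \<le> j\<close> j len by simp
      then show ?thesis using i tj unfolding tpt_def by force
    qed
  next
    fix i assume "i \<in> (\<Union>j\<in>{k..<Kn T n}. {i. i < n \<and> T n i = tpt T n j})"
    then obtain j where j: "k \<le> j" "j < Kn T n" and i: "i < n" "T n i = ?L ! j" unfolding tpt_def by auto
    have "?L ! k \<le> ?L ! j" using sorted_nth_mono[OF so j(1)] j len by simp
    then show "i \<in> {i. i < n \<and> T n i \<ge> tpt T n k}" using i unfolding tpt_def by auto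
  qed
  have "card (\<Union>j\<in>{k..<Kn T n}. {i. i < n \<and> T n i = tpt T n j})
      = (\<Sum>j\<in>{k..<Kn T n}. card {i. i < n \<and> T n i = tpt T n j})"
  proof (rule card_UN_disjoint)
    show "\<forall>j\<in>{k..<Kn T n}. \<forall>j'\<in>{k..<Kn T n}. j \<noteq> j' \<longrightarrow>
        {i. i < n \<and> T n i = tpt T n j} \<inter> {i. i < n \<and> T n i = tpt T n j'} = {}"
    proof (intro ballI impI)
      fix j j' assume "j \<in> {k..<Kn T n}" "j' \<in> {k..<Kn T n}" "j \<noteq> j'"
      then have "?L ! j \<noteq> ?L ! j'" using di len by (simp add: nth_eq_iff_index_eq)
      then show "{i. i < n \<and> T n i = tpt T n j} \<inter> {i. i < n \<and> T n i = tpt T n j'} = {}"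
        unfolding tpt_def by auto
    qed
  qed auto
  then show ?thesis unfolding nk_def dk_def eq by simp
qed

lemma count_facts:
  assumes t: "0 \<le> tpt T n k" and Tn: "\<And>i. i < n \<Longrightarrow> 0 \<le> T n i"
  shows "Dk T n k \<omega> \<le> dk T n k"
    "Dk T n k \<omega> \<le> N1k T n k \<omega> + N0k T n k \<omega>"
    "real (N1k T n k \<omega>) + real (N0k T n k \<omega>) - real (Dk T n k \<omega>) \<le> real (nk T n k) - real (dk T n k)"
    "dk T n k \<le> nk T n k" "nk T n k \<le> n"
proof -
  let ?t = "tpt T n k"
  define DS where "DS = {i. i < n \<and> Deltar T n \<omega> i \<and> Wr T n \<omega> i = ennreal ?t}"
  define S1 where "S1 = {i. i < n \<and> Zr \<omega> i \<and> ennreal ?t \<le> Wr T n \<omega> i}"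
  define S0 where "S0 = {i. i < n \<and> \<not> Zr \<omega> i \<and> ennreal ?t \<le> Wr T n \<omega> i}"
  define ES where "ES = {i. i < n \<and> T n i = ?t}"
  define GS where "GS = {i. i < n \<and> T n i \<ge> ?t}"
  have DS_ES: "DS \<subseteq> ES"
  proof
    fix i assume "i \<in> DS"
    then have i: "i < n" and le: "ennreal (T n i) \<le> Cr \<omega> i" and w: "min (ennreal (T n i)) (Cr \<omega> i) = ennreal ?t"
      unfolding DS_def Deltar_def Wr_def by auto
    then have "ennreal (T n i) = ennreal ?t" by (simp add: min_def)
    then have "T n i = ?t" using Tn[OF i] t by (simp add: ennreal_inj)
    then show "i \<in> ES" using i by (simp add: ES_def)
  qed
  have DS_S: "DS \<subseteq> S1 \<union> S0" unfolding DS_def S1_def S0_def by auto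
  have S_GS: "(S1 \<union> S0) - DS \<subseteq> GS - ES"
  proof
    fix i assume a: "i \<in> (S1 \<union> S0) - DS"
    then have i: "i < n" and le: "ennreal ?t \<le> min (ennreal (T n i)) (Cr \<omega> i)"
      unfolding S1_def S0_def Wr_def by auto
    then have tT: "?t \<le> T n i" using Tn[OF i] by simp
    have "T n i \<noteq> ?t"
    proof
      assume e: "T n i = ?t"
      then have "ennreal (T n i) \<le> Cr \<omega> i" using le by simp
      moreover have "min (ennreal (T n i)) (Cr \<omega> i) = ennreal ?t" using e calculation by (simp add: min_def)
      ultimately have "i \<in> DS" using i unfolding DS_def Deltar_def Wr_def by auto
      then show False using a by simp
    qed
    then show "i \<in> GS - ES" using i tT by (simp add: GS_def ES_def)
  qed
  have ES_GS: "ES \<subseteq> GS" unfolding ES_def GS_def by auto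
  have fins: "finite DS" "finite S1" "finite S0" "finite ES" "finite GS"
    unfolding DS_def S1_def S0_def ES_def GS_def by auto
  have disj: "S1 \<inter> S0 = {}" unfolding S1_def S0_def by auto
  have cU: "card (S1 \<union> S0) = card S1 + card S0" using fins disj by (simp add: card_Un_disjoint)
  show "Dk T n k \<omega> \<le> dk T n k"
    unfolding Dk_def dk_def using card_mono[OF fins(4) DS_ES] by (simp add: DS_def ES_def)
  have "card DS \<le> card (S1 \<union> S0)" using card_mono DS_S fins by (simp add: card_mono)
  then show "Dk T n k \<omega> \<le> N1k T n k \<omega> + N0k T n k \<omega>"
    unfolding Dk_def N1k_def N0k_def using cU by (simp add: DS_def S1_def S0_def)
  have "card ((S1 \<union> S0) - DS) \<le> card (GS - ES)" using S_GS fins by (intro card_mono) auto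
  moreover have "card ((S1 \<union> S0) - DS) = card (S1 \<union> S0) - card DS"
    using DS_S fins by (intro card_Diff_subset) auto
  moreover have "card (GS - ES) = card GS - card ES" using ES_GS fins by (intro card_Diff_subset) auto
  moreover have "card DS \<le> card (S1 \<union> S0)" using DS_S fins by (intro card_mono) auto
  moreover have "card ES \<le> card GS" using ES_GS fins by (intro card_mono) auto
  ultimately have "real (card S1 + card S0) - real (card DS) \<le> real (card GS) - real (card ES)"
    using cU by linarith
  then show "real (N1k T n k \<omega>) + real (N0k T n k \<omega>) - real (Dk T n k \<omega>) \<le> real (nk T n k) - real (dk T n k)"
    unfolding N1k_def N0k_def Dk_def nk_def dk_def DS_def S1_def S0_def GS_def ES_def by simp
  show "dk T n k \<le> nk T n k" unfolding dk_def nk_def using card_mono[OF fins(5) ES_GS]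
    by (simp add: ES_def GS_def)
  have "GS \<subseteq> {..<n}" unfolding GS_def by auto
  then show "nk T n k \<le> n" unfolding nk_def using card_mono[of "{..<n}" GS] by (simp add: GS_def)
qed


definition FF :: "real \<Rightarrow> real \<Rightarrow> real \<Rightarrow> real \<Rightarrow> real" where
  "FF a b1 b0 w = a * (b1 + b0 - a) * b1 * b0 / ((b1 + b0)\<^sup>2 * (b1 + b0 - w))"

lemma dist2_le: "dist (x::'a::metric_space, y::'b::metric_space) (x', y') \<le> dist x x' + dist y y'"
proof -
  have "dist (x, y) (x', y') = sqrt ((dist x x')\<^sup>2 + (dist y y')\<^sup>2)" by (rule dist_Pair_Pair)
  also have "\<dots> \<le> dist x x' + dist y y'" by (rule sqrt_sum_squares_le_sum) auto
  finally show ?thesis .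
qed

lemma dist4: "dist (a::real, b::real, c::real, d::real) (a', b', c', d') \<le> \<bar>a - a'\<bar> + \<bar>b - b'\<bar> + \<bar>c - c'\<bar> + \<bar>d - d'\<bar>"
proof -
  have "dist (a, b, c, d) (a', b', c', d') \<le> dist a a' + dist (b, c, d) (b', c', d')" by (rule dist2_le)
  also have "dist (b, c, d) (b', c', d') \<le> dist b b' + dist (c, d) (c', d')" by (rule dist2_le)
  also have "dist (c, d) (c', d') \<le> dist c c' + dist d d'" by (rule dist2_le)
  finally show ?thesis by (simp add: dist_real_def add.assoc)
qed

lemma FF_key:
  assumes pos: "b1L + b0L \<noteq> 0"
    and la: "\<alpha> \<longlonglongrightarrow> aL" and l1: "\<beta>1 \<longlonglongrightarrow> b1L" and l0: "\<beta>0 \<longlonglongrightarrow> b0L"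
    and lc: "c \<longlonglongrightarrow> FF aL b1L b0L 0" and e: "\<epsilon> > 0"
  shows "\<exists>\<delta>>0. eventually (\<lambda>n. \<forall>a b1 b0. \<bar>a - \<alpha> n\<bar> \<le> \<delta> \<longrightarrow> \<bar>b1 - \<beta>1 n\<bar> \<le> \<delta> \<longrightarrow> \<bar>b0 - \<beta>0 n\<bar> \<le> \<delta>
      \<longrightarrow> \<bar>FF a b1 b0 (1 / real n) - c n\<bar> \<le> \<epsilon>) sequentially"
proof -
  define G where "G z = FF (fst z) (fst (snd z)) (fst (snd (snd z))) (snd (snd (snd z)))" for z :: "real \<times> real \<times> real \<times> real"
  define z0 where "z0 = (aL, b1L, b0L, 0::real)"
  have "isCont G z0"
    unfolding G_def FF_def z0_def using pos by (intro continuous_intros) auto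
  then have "G \<midarrow>z0\<rightarrow> G z0" by (simp add: isCont_def)
  from metric_LIM_D[OF this, of "\<epsilon>/2"] e obtain s where s: "s > 0"
    and sH: "\<And>x. x \<noteq> z0 \<and> dist x z0 < s \<Longrightarrow> dist (G x) (G z0) < \<epsilon>/2" by auto
  have sH': "dist (G x) (G z0) < \<epsilon>/2" if "dist x z0 < s" for x
    using sH[of x] that e by (cases "x = z0") auto
  define \<delta> where "\<delta> = s / 8"
  have d: "\<delta> > 0" using s by (simp add: \<delta>_def)
  have ev1: "eventually (\<lambda>n. \<bar>\<alpha> n - aL\<bar> < \<delta>) sequentially"
    using tendstoD[OF la d] by (simp add: dist_real_def)
  have ev2: "eventually (\<lambda>n. \<bar>\<beta>1 n - b1L\<bar> < \<delta>) sequentially"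
    using tendstoD[OF l1 d] by (simp add: dist_real_def)
  have ev3: "eventually (\<lambda>n. \<bar>\<beta>0 n - b0L\<bar> < \<delta>) sequentially"
    using tendstoD[OF l0 d] by (simp add: dist_real_def)
  have ev4: "eventually (\<lambda>n. \<bar>c n - FF aL b1L b0L 0\<bar> < \<epsilon>/2) sequentially"
    using tendstoD[OF lc, of "\<epsilon>/2"] e by (simp add: dist_real_def)
  have "(\<lambda>n. 1 / real n) \<longlonglongrightarrow> 0" by (rule lim_const_over_n)
  from tendstoD[OF this d] have ev5: "eventually (\<lambda>n. \<bar>1 / real n\<bar> < \<delta>) sequentially"
    by (simp add: dist_real_def)
  show ?thesis
  proof (intro exI[of _ \<delta>] conjI d)
    show "eventually (\<lambda>n. \<forall>a b1 b0. \<bar>a - \<alpha> n\<bar> \<le> \<delta> \<longrightarrow> \<bar>b1 - \<beta>1 n\<bar> \<le> \<delta> \<longrightarrow> \<bar>b0 - \<beta>0 n\<bar> \<le> \<delta>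
      \<longrightarrow> \<bar>FF a b1 b0 (1 / real n) - c n\<bar> \<le> \<epsilon>) sequentially"
      using ev1 ev2 ev3 ev4 ev5
    proof eventually_elim
      case (elim n)
      show ?case
      proof (intro allI impI)
        fix a b1 b0 assume h: "\<bar>a - \<alpha> n\<bar> \<le> \<delta>" "\<bar>b1 - \<beta>1 n\<bar> \<le> \<delta>" "\<bar>b0 - \<beta>0 n\<bar> \<le> \<delta>"
        have "dist (a, b1, b0, 1 / real n) z0 \<le> \<bar>a - aL\<bar> + \<bar>b1 - b1L\<bar> + \<bar>b0 - b0L\<bar> + \<bar>1 / real n - 0\<bar>"
          unfolding z0_def by (rule dist4)
        also have "\<dots> < s"
        proof -
          have "\<bar>a - aL\<bar> < 2 * \<delta>" using h(1) elim(1) by (smt (verit))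
          moreover have "\<bar>b1 - b1L\<bar> < 2 * \<delta>" using h(2) elim(2) by (smt (verit))
          moreover have "\<bar>b0 - b0L\<bar> < 2 * \<delta>" using h(3) elim(3) by (smt (verit))
          moreover have "\<bar>1 / real n - 0\<bar> < \<delta>" using elim(5) by simp
          ultimately show ?thesis unfolding \<delta>_def by linarith
        qed
        finally have "dist (G (a, b1, b0, 1 / real n)) (G z0) < \<epsilon>/2" by (rule sH')
        then have "\<bar>FF a b1 b0 (1 / real n) - FF aL b1L b0L 0\<bar> < \<epsilon>/2"
          unfolding G_def z0_def by (simp add: dist_real_def)
        then show "\<bar>FF a b1 b0 (1 / real n) - c n\<bar> \<le> \<epsilon>" using elim(4) unfolding abs_less_iff abs_le_iff by linarith
      qed
    qed
  qed
qed

lemma VF_FF: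
  fixes D N1 N0 :: real and n :: nat
  assumes n: "n > 0"
  shows "D * (N1 + N0 - D) * N1 * N0 / ((N1 + N0)\<^sup>2 * (N1 + N0 - 1)) / real n
       = FF (D / real n) (N1 / real n) (N0 / real n) (1 / real n)"
proof -
  define m where "m = real n"
  have m: "m > 0" using n by (simp add: m_def)
  define X where "X = (D/m) * (N1/m + N0/m - D/m) * (N1/m) * (N0/m)"
  define Y where "Y = (N1/m + N0/m)\<^sup>2 * (N1/m + N0/m - 1/m)"
  have num: "D * (N1 + N0 - D) * N1 * N0 = m^4 * X" unfolding X_def using m
    by (simp add: field_simps power4_eq_xxxx)
  have den: "(N1 + N0)\<^sup>2 * (N1 + N0 - 1) = m^3 * Y" unfolding Y_def using m
    by (simp add: field_simps power2_eq_square power3_eq_cube)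
  have "m^4 * X / (m^3 * Y) / m = X / Y"
  proof (cases "Y = 0")
    case False then show ?thesis using m by (simp add: field_simps power4_eq_xxxx power3_eq_cube)
  qed simp
  then show ?thesis unfolding num den FF_def X_def[symmetric] Y_def[symmetric] m_def[symmetric] .
qed

lemma FFeq:
  fixes P g1 g0 Ad l \<gamma> :: real
  assumes g: "\<gamma> = P * g1 + (1 - P) * g0" and gz: "\<gamma> \<noteq> 0" and lz: "l \<noteq> 0" and Az: "Ad \<noteq> 0"
  shows "\<gamma> * (P * g1 / \<gamma>) * (1 - P * g1 / \<gamma>) * (Ad / l) * l * (1 - l)
        = FF (Ad * \<gamma>) (Ad / l * (P * g1)) (Ad / l * ((1 - P) * g0)) 0"
proof -
  have s: "Ad / l * (P * g1) + Ad / l * ((1 - P) * g0) = Ad * \<gamma> / l" using lz unfolding g by (simp add: field_simps)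
  have o: "(1 - P) * g0 = \<gamma> - P * g1" unfolding g by simp
  show ?thesis unfolding FF_def s diff_0_right o using gz lz Az
    by (simp add: field_simps power2_eq_square)
qed


lemma cip_hoeff:
  fixes f :: "nat \<Rightarrow> nat \<Rightarrow> 'a \<Rightarrow> real"
  assumes M0: "\<And>n. prob_space (M0 n)" and fm: "\<And>n i. f n i \<in> borel_measurable (M0 n)"
    and bnd: "\<And>n i x. x \<in> space (M0 n) \<Longrightarrow> 0 \<le> f n i x \<and> f n i x \<le> 1"
  shows "cip (\<lambda>n. PiM {..<n} (\<lambda>_. M0 n)) (\<lambda>n \<omega>. (\<Sum>i<n. f n i (\<omega> i)) / real n)
            (\<lambda>n. (\<Sum>i<n. integral\<^sup>L (M0 n) (f n i)) / real n)"
  unfolding cip_def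
proof (intro allI impI)
  fix \<epsilon> :: real assume e: "\<epsilon> > 0"
  have lim: "(\<lambda>n. 2 * exp (-2 * \<epsilon>\<^sup>2 * real n)) \<longlonglongrightarrow> 0"
  proof -
    have q: "exp (-2 * \<epsilon>\<^sup>2) < 1" using e by simp
    have "(\<lambda>n. exp (-2 * \<epsilon>\<^sup>2) ^ n) \<longlonglongrightarrow> 0"
      by (rule LIMSEQ_power_zero) (use q in simp)
    moreover have "exp (-2 * \<epsilon>\<^sup>2 * real n) = exp (-2 * \<epsilon>\<^sup>2) ^ n" for n
      by (metis exp_of_nat_mult mult.commute)
    ultimately have "(\<lambda>n. exp (-2 * \<epsilon>\<^sup>2 * real n)) \<longlonglongrightarrow> 0" by simp
    then show ?thesis using tendsto_mult_right_zero by blast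
  qed
  show "(\<lambda>n. measure (PiM {..<n} (\<lambda>_. M0 n)) {\<omega> \<in> space (PiM {..<n} (\<lambda>_. M0 n)).
      \<bar>(\<Sum>i<n. f n i (\<omega> i)) / real n - (\<Sum>i<n. integral\<^sup>L (M0 n) (f n i)) / real n\<bar> > \<epsilon>}) \<longlonglongrightarrow> 0"
  proof (rule tendsto_sandwich[OF _ _ tendsto_const lim])
    show "eventually (\<lambda>n. 0 \<le> measure (PiM {..<n} (\<lambda>_. M0 n)) {\<omega> \<in> space (PiM {..<n} (\<lambda>_. M0 n)).
      \<bar>(\<Sum>i<n. f n i (\<omega> i)) / real n - (\<Sum>i<n. integral\<^sup>L (M0 n) (f n i)) / real n\<bar> > \<epsilon>}) sequentially"
      by simp
    show "eventually (\<lambda>n. measure (PiM {..<n} (\<lambda>_. M0 n)) {\<omega> \<in> space (PiM {..<n} (\<lambda>_. M0 n)).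
      \<bar>(\<Sum>i<n. f n i (\<omega> i)) / real n - (\<Sum>i<n. integral\<^sup>L (M0 n) (f n i)) / real n\<bar> > \<epsilon>}
       \<le> 2 * exp (-2 * \<epsilon>\<^sup>2 * real n)) sequentially"
      using eventually_gt_at_top[of 0]
    proof eventually_elim
      case (elim n)
      let ?P = "PiM {..<n} (\<lambda>_. M0 n)"
      interpret P: prob_space ?P by (rule prob_space_PiM) (rule M0)
      have [measurable]: "f n i \<in> borel_measurable (M0 n)" for i by (rule fm)
      have sm: "(\<lambda>\<omega>. \<Sum>i<n. f n i (\<omega> i)) \<in> borel_measurable ?P" by measurable
      have "measure ?P {\<omega> \<in> space ?P.
          \<bar>(\<Sum>i<n. f n i (\<omega> i)) / real n - (\<Sum>i<n. integral\<^sup>L (M0 n) (f n i)) / real n\<bar> > \<epsilon>}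
        \<le> measure ?P {\<omega> \<in> space ?P.
          \<bar>(\<Sum>i<n. f n i (\<omega> i)) - (\<Sum>i<n. integral\<^sup>L (M0 n) (f n i))\<bar> \<ge> real n * \<epsilon>}"
      proof (rule P.finite_measure_mono)
        show "{\<omega> \<in> space ?P. \<bar>(\<Sum>i<n. f n i (\<omega> i)) - (\<Sum>i<n. integral\<^sup>L (M0 n) (f n i))\<bar> \<ge> real n * \<epsilon>} \<in> P.events"
          using sm by measurable
        show "{\<omega> \<in> space ?P.
          \<bar>(\<Sum>i<n. f n i (\<omega> i)) / real n - (\<Sum>i<n. integral\<^sup>L (M0 n) (f n i)) / real n\<bar> > \<epsilon>}
          \<subseteq> {\<omega> \<in> space ?P.
          \<bar>(\<Sum>i<n. f n i (\<omega> i)) - (\<Sum>i<n. integral\<^sup>L (M0 n) (f n i))\<bar> \<ge> real n * \<epsilon>}"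
        proof safe
          fix \<omega> assume "\<bar>(\<Sum>i<n. f n i (\<omega> i)) / real n - (\<Sum>i<n. integral\<^sup>L (M0 n) (f n i)) / real n\<bar> > \<epsilon>"
          then have "\<bar>(\<Sum>i<n. f n i (\<omega> i)) - (\<Sum>i<n. integral\<^sup>L (M0 n) (f n i))\<bar> / real n > \<epsilon>"
            by (simp add: diff_divide_distrib[symmetric])
          then show "\<bar>(\<Sum>i<n. f n i (\<omega> i)) - (\<Sum>i<n. integral\<^sup>L (M0 n) (f n i))\<bar> \<ge> real n * \<epsilon>"
            using elim by (simp add: field_simps)
        qed
      qed
      also have "\<dots> \<le> 2 * exp (-2 * (real n * \<epsilon>)\<^sup>2 / real n)"
        by (rule hoeff_PiM[OF M0 fm bnd elim]) (use e in auto)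
      also have "-2 * (real n * \<epsilon>)\<^sup>2 / real n = -2 * \<epsilon>\<^sup>2 * real n"
        using elim by (simp add: field_simps power2_eq_square)
      finally show ?case .
    qed
  qed
qed


lemma cip_center:
  assumes "cip M Y c" and ev: "eventually (\<lambda>n. c n = c' n) sequentially"
  shows "cip M Y c'"
  unfolding cip_def
proof (intro allI impI)
  fix \<epsilon> :: real assume e: "\<epsilon> > 0"
  have "(\<lambda>n. measure (M n) {\<omega> \<in> space (M n). \<bar>Y n \<omega> - c n\<bar> > \<epsilon>}) \<longlonglongrightarrow> 0"
    using assms(1) e unfolding cip_def by blast
  moreover have "eventually (\<lambda>n. measure (M n) {\<omega> \<in> space (M n). \<bar>Y n \<omega> - c n\<bar> > \<epsilon>}
      = measure (M n) {\<omega> \<in> space (M n). \<bar>Y n \<omega> - c' n\<bar> > \<epsilon>}) sequentially"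
    using ev by eventually_elim simp
  ultimately show "(\<lambda>n. measure (M n) {\<omega> \<in> space (M n). \<bar>Y n \<omega> - c' n\<bar> > \<epsilon>}) \<longlonglongrightarrow> 0"
    by (rule Lim_transform_eventually)
qed

lemma sum_if_const: "(\<Sum>i<(n::nat). if P i then c else 0) = real (card {i. i < n \<and> P i}) * (c::real)"
proof -
  have "(\<Sum>i<n. if P i then c else 0) = (\<Sum>i<n. c * (if P i then 1 else 0))"
    by (intro sum.cong) auto
  also have "\<dots> = c * (\<Sum>i<n. if P i then 1 else 0)" by (simp add: sum_distrib_left)
  finally show ?thesis by (simp add: card_sum)
qed

lemma finish:
  assumes measY: "\<And>n. Y n \<in> borel_measurable (M n)"
    and prob: "\<And>n. prob_space (M n)"
    and bY: "\<And>n \<omega>. \<omega> \<in> space (M n) \<Longrightarrow> \<bar>Y n \<omega>\<bar> \<le> 1"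
    and cb: "Bseq c"
    and ci: "cip M Y c"
  shows "(\<lambda>n. integral\<^sup>L (M n) (Y n) - c n) \<longlonglongrightarrow> 0" "cip M Y (\<lambda>n. integral\<^sup>L (M n) (Y n))"
proof -
  obtain B where B: "\<And>n. \<bar>c n\<bar> \<le> B" using cb unfolding Bseq_def by (metis real_norm_def less_imp_le)
  have B1: "\<And>n. \<bar>c n\<bar> \<le> max B 1" using B by (meson max.cobounded1 order_trans)
  have bY': "\<And>n \<omega>. \<omega> \<in> space (M n) \<Longrightarrow> \<bar>Y n \<omega>\<bar> \<le> max B 1" using bY by (meson max.cobounded2 order_trans)
  show lim: "(\<lambda>n. integral\<^sup>L (M n) (Y n) - c n) \<longlonglongrightarrow> 0"
    by (rule cip_expect[OF measY prob bY' B1 ci])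
  show "cip M Y (\<lambda>n. integral\<^sup>L (M n) (Y n))"
  proof (rule cip3[OF measY measY measY measY prob ci ci ci])
    fix \<epsilon> :: real assume e: "\<epsilon> > 0"
    have "eventually (\<lambda>n. \<bar>integral\<^sup>L (M n) (Y n) - c n\<bar> < \<epsilon>/2) sequentially"
      using tendstoD[OF lim, of "\<epsilon>/2"] e by (simp add: dist_real_def)
    then have "eventually (\<lambda>n. \<forall>\<omega>\<in>space (M n). \<bar>Y n \<omega> - integral\<^sup>L (M n) (Y n)\<bar> > \<epsilon> \<longrightarrow>
          (\<bar>Y n \<omega> - c n\<bar> > \<epsilon>/2 \<or> \<bar>Y n \<omega> - c n\<bar> > \<epsilon>/2 \<or> \<bar>Y n \<omega> - c n\<bar> > \<epsilon>/2)) sequentially"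
    proof eventually_elim
      case (elim n)
      show ?case
      proof (intro ballI impI)
        fix \<omega> assume "\<bar>Y n \<omega> - integral\<^sup>L (M n) (Y n)\<bar> > \<epsilon>"
        then have "\<bar>Y n \<omega> - c n\<bar> > \<epsilon>/2" using elim by linarith
        then show "\<bar>Y n \<omega> - c n\<bar> > \<epsilon>/2 \<or> \<bar>Y n \<omega> - c n\<bar> > \<epsilon>/2 \<or> \<bar>Y n \<omega> - c n\<bar> > \<epsilon>/2" by simp
      qed
    qed
    then show "\<exists>\<delta>>0. eventually (\<lambda>n. \<forall>\<omega>\<in>space (M n). \<bar>Y n \<omega> - integral\<^sup>L (M n) (Y n)\<bar> > \<epsilon> \<longrightarrow>
          (\<bar>Y n \<omega> - c n\<bar> > \<delta> \<or> \<bar>Y n \<omega> - c n\<bar> > \<delta> \<or> \<bar>Y n \<omega> - c n\<bar> > \<delta>)) sequentially"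
      using e by (intro exI[of _ "\<epsilon>/2"]) auto
  qed
qed


theorem lemmaA15:
  fixes p :: "nat \<Rightarrow> real"
    and T :: "nat \<Rightarrow> nat \<Rightarrow> real"
    and Cd :: "nat \<Rightarrow> (ennreal \<times> ennreal) measure"
    and K :: nat
  assumes p_range: "\<And>n. 0 < p n \<and> p n < 1"
    and Cd_prob: "\<And>n. prob_space (Cd n)"
    and Cd_sets: "\<And>n. sets (Cd n) = sets (borel \<Otimes>\<^sub>M borel)"
    and T_nonneg: "\<And>n i. i < n \<Longrightarrow> 0 \<le> T n i"
    and K_fixed: "\<forall>\<^sub>F n in sequentially. Kn T n = K"
    and p_lim: "\<exists>l. p \<longlonglongrightarrow> l \<and> 0 < l \<and> l < 1"
    and d_lim: "\<And>k. k < K \<Longrightarrow> convergent (\<lambda>n. real (dk T n k) / real n)"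
    and G1_lim: "\<And>k. k < K \<Longrightarrow> convergent (\<lambda>n. Gz Cd n True (tpt T n k))"
    and G0_lim: "\<And>k. k < K \<Longrightarrow> convergent (\<lambda>n. Gz Cd n False (tpt T n k))"
    and some_k: "\<exists>k<K. lim (\<lambda>n. real (dk T n k) / real n) > 0
                      \<and> lim (\<lambda>n. Gz Cd n True (tpt T n k)) > 0
                      \<and> lim (\<lambda>n. Gz Cd n False (tpt T n k)) > 0
                      \<and> (\<exists>l. (\<lambda>n. hk T n k) \<longlonglongrightarrow> l \<and> l < 1)"
  shows "\<forall>k<K.
    (if lim (\<lambda>n. real (dk T n k) / real n) > 0
        \<and> lim (\<lambda>n. Gz Cd n True (tpt T n k)) > 0
        \<and> lim (\<lambda>n. Gz Cd n False (tpt T n k)) > 0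
        \<and> (\<exists>l. (\<lambda>n. hk T n k) \<longlonglongrightarrow> l \<and> l < 1)
     then
       (\<lambda>n. prob_space.expectation (popM p Cd n) (Vk T n k) / real n
            - gk p Cd T n k * phik p Cd T n k * (1 - phik p Cd T n k)
              * (real (nk T n k) / real n) * hk T n k * (1 - hk T n k)) \<longlonglongrightarrow> 0
       \<and> (\<forall>\<epsilon>>0. (\<lambda>n. measure (popM p Cd n)
              {\<omega> \<in> space (popM p Cd n).
                 \<bar>Vk T n k \<omega> / real n
                  - prob_space.expectation (popM p Cd n) (Vk T n k) / real n\<bar> > \<epsilon>})
            \<longlonglongrightarrow> 0)
     else
       (\<lambda>n. prob_space.expectation (popM p Cd n) (Vk T n k) / real n) \<longlonglongrightarrow> 0
       \<and> (\<forall>\<epsilon>>0. (\<lambda>n. measure (popM p Cd n)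
              {\<omega> \<in> space (popM p Cd n). \<bar>Vk T n k \<omega> / real n\<bar> > \<epsilon>})
            \<longlonglongrightarrow> 0))"
  apply (intro allI impI)
  subgoal premises prems for k
proof -
  have k: "k < K" by (rule prems)
  define M where "M n = popM p Cd n" for n
  define M0 where "M0 n = measure_pmf (bernoulli_pmf (p n)) \<Otimes>\<^sub>M Cd n" for n
  have M_eq: "M n = PiM {..<n} (\<lambda>_. M0 n)" for n unfolding M_def M0_def popM_def ..
  have M0p: "prob_space (M0 n)" for n
    unfolding M0_def by (intro prob_space_pair measure_pmf.prob_space_axioms Cd_prob)
  have Mp: "prob_space (M n)" for n unfolding M_eq by (rule prob_space_PiM) (rule M0p)
  define t where "t n = tpt T n k" for n
  have evK: "eventually (\<lambda>n. k < Kn T n) sequentially"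
    using K_fixed by eventually_elim (use k in simp)
  have tnn: "0 \<le> t n" if "k < Kn T n" for n
    using tpt_in[OF that] T_nonneg unfolding t_def by auto
  have evn: "eventually (\<lambda>n. 0 < n) sequentially" by (rule eventually_gt_at_top)
  have [measurable]: "fD (T n) (t n) i \<in> borel_measurable (M0 n)" "f1 (T n) (t n) i \<in> borel_measurable (M0 n)"
    "f0 (T n) (t n) i \<in> borel_measurable (M0 n)" for n i
    unfolding M0_def using meas_f[OF Cd_sets] by auto
  define a where "a n \<omega> = real (Dk T n k \<omega>) / real n" for n \<omega>
  define b1 where "b1 n \<omega> = real (N1k T n k \<omega>) / real n" for n \<omega>
  define b0 where "b0 n \<omega> = real (N0k T n k \<omega>) / real n" for n \<omega>
  define Y where "Y n \<omega> = Vk T n k \<omega> / real n" for n \<omega>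
  have a_eq: "a n \<omega> = (\<Sum>i<n. fD (T n) (t n) i (\<omega> i)) / real n" for n \<omega>
    unfolding a_def t_def Dk_sum ..
  have b1_eq: "b1 n \<omega> = (\<Sum>i<n. f1 (T n) (t n) i (\<omega> i)) / real n" for n \<omega>
    unfolding b1_def t_def N1k_sum ..
  have b0_eq: "b0 n \<omega> = (\<Sum>i<n. f0 (T n) (t n) i (\<omega> i)) / real n" for n \<omega>
    unfolding b0_def t_def N0k_sum ..
  have Vk_eq: "Vk T n k \<omega> = (\<Sum>i<n. fD (T n) (t n) i (\<omega> i)) *
      ((\<Sum>i<n. f1 (T n) (t n) i (\<omega> i)) + (\<Sum>i<n. f0 (T n) (t n) i (\<omega> i)) - (\<Sum>i<n. fD (T n) (t n) i (\<omega> i)))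
      * (\<Sum>i<n. f1 (T n) (t n) i (\<omega> i)) * (\<Sum>i<n. f0 (T n) (t n) i (\<omega> i))
      / (((\<Sum>i<n. f1 (T n) (t n) i (\<omega> i)) + (\<Sum>i<n. f0 (T n) (t n) i (\<omega> i)))\<^sup>2
         * ((\<Sum>i<n. f1 (T n) (t n) i (\<omega> i)) + (\<Sum>i<n. f0 (T n) (t n) i (\<omega> i)) - 1))" for n \<omega>
    unfolding Vk_def Nk_def t_def of_nat_add Dk_sum N1k_sum N0k_sum ..
  have ma: "a n \<in> borel_measurable (M n)" for n unfolding a_eq[abs_def] M_eq by measurable
  have mb1: "b1 n \<in> borel_measurable (M n)" for n unfolding b1_eq[abs_def] M_eq by measurable
  have mb0: "b0 n \<in> borel_measurable (M n)" for n unfolding b0_eq[abs_def] M_eq by measurable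
  have mV: "Vk T n k \<in> borel_measurable (M n)" for n unfolding Vk_eq[abs_def] M_eq by measurable
  have mY: "Y n \<in> borel_measurable (M n)" for n unfolding Y_def[abs_def] using mV by measurable
  have Y_FF: "Y n \<omega> = FF (a n \<omega>) (b1 n \<omega>) (b0 n \<omega>) (1 / real n)" if "0 < n" for n \<omega>
    unfolding Y_def a_def b1_def b0_def Vk_def Nk_def of_nat_add by (rule VF_FF[OF that])
  have Vb: "0 \<le> Vk T n k \<omega> \<and> Vk T n k \<omega> \<le> real (Dk T n k \<omega>)
      \<and> Vk T n k \<omega> \<le> real (N1k T n k \<omega> + N0k T n k \<omega>) - real (Dk T n k \<omega>)
      \<and> Vk T n k \<omega> \<le> real (N1k T n k \<omega>) \<and> Vk T n k \<omega> \<le> real (N0k T n k \<omega>)"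
    if "Dk T n k \<omega> \<le> N1k T n k \<omega> + N0k T n k \<omega>" for n \<omega>
    unfolding Vk_def Nk_def using V_bound[OF that] by simp
  have Dn: "Dk T n k \<omega> \<le> n" for n \<omega>
  proof -
    have "{i. i < n \<and> Deltar T n \<omega> i \<and> Wr T n \<omega> i = ennreal (tpt T n k)} \<subseteq> {..<n}" by auto
    then show ?thesis unfolding Dk_def using card_mono[of "{..<n}"] by fastforce
  qed
  have DN: "Dk T n k \<omega> \<le> N1k T n k \<omega> + N0k T n k \<omega>" for n \<omega>
  proof -
    have "{i. i < n \<and> Deltar T n \<omega> i \<and> Wr T n \<omega> i = ennreal (tpt T n k)} \<subseteq>
      {i. i < n \<and> Zr \<omega> i \<and> ennreal (tpt T n k) \<le> Wr T n \<omega> i} \<union> {i. i < n \<and> \<not> Zr \<omega> i \<and> ennreal (tpt T n k) \<le> Wr T n \<omega> i}"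
      by auto
    then have "Dk T n k \<omega> \<le> card ({i. i < n \<and> Zr \<omega> i \<and> ennreal (tpt T n k) \<le> Wr T n \<omega> i} \<union> {i. i < n \<and> \<not> Zr \<omega> i \<and> ennreal (tpt T n k) \<le> Wr T n \<omega> i})"
      unfolding Dk_def by (intro card_mono) auto
    also have "\<dots> \<le> N1k T n k \<omega> + N0k T n k \<omega>" unfolding N1k_def N0k_def by (rule card_Un_le)
    finally show ?thesis .
  qed
  have Y0: "0 \<le> Y n \<omega>" for n \<omega> using Vb[OF DN] unfolding Y_def by simp
  have Ya: "Y n \<omega> \<le> a n \<omega>" for n \<omega> using Vb[OF DN] unfolding Y_def a_def by (simp add: divide_right_mono)
  have Yb1: "Y n \<omega> \<le> b1 n \<omega>" for n \<omega> using Vb[OF DN] unfolding Y_def b1_def by (simp add: divide_right_mono)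
  have Yb0: "Y n \<omega> \<le> b0 n \<omega>" for n \<omega> using Vb[OF DN] unfolding Y_def b0_def by (simp add: divide_right_mono)
  have YND: "Y n \<omega> \<le> (real (N1k T n k \<omega>) + real (N0k T n k \<omega>) - real (Dk T n k \<omega>)) / real n" for n \<omega>
    using Vb[OF DN] unfolding Y_def by (simp add: divide_right_mono)
  have Y1: "\<bar>Y n \<omega>\<bar> \<le> 1" for n \<omega>
  proof (cases "n = 0")
    case False
    have "a n \<omega> \<le> 1" using Dn[of n \<omega>] False unfolding a_def by simp
    then show ?thesis using Y0[of n \<omega>] Ya[of n \<omega>] by simp
  qed (simp add: Y_def)
  have EY: "integral\<^sup>L (M n) (Y n) = prob_space.expectation (popM p Cd n) (Vk T n k) / real n" for n
    unfolding Y_def M_def by simp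
  have Mfun: "M = (\<lambda>n. PiM {..<n} (\<lambda>_. M0 n))" using M_eq by auto
  have ED: "(\<Sum>i<n. integral\<^sup>L (M0 n) (fD (T n) (t n) i)) / real n = real (dk T n k) / real n * gk p Cd T n k"
    if "k < Kn T n" for n
  proof -
    have "(\<Sum>i<n. integral\<^sup>L (M0 n) (fD (T n) (t n) i)) = (\<Sum>i<n. if T n i = t n then gk p Cd T n k else 0)"
    proof (rule sum.cong[OF refl])
      fix i assume i: "i \<in> {..<n}"
      show "integral\<^sup>L (M0 n) (fD (T n) (t n) i) = (if T n i = t n then gk p Cd T n k else 0)"
        unfolding M0_def using p_range[of n] tnn[OF that] T_nonneg[of i n] i Cd_prob Cd_sets
        by (subst exp_f(1)) (auto simp: gk_def Gmix_def Gz_def t_def less_imp_le)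
    qed
    also have "\<dots> = real (dk T n k) * gk p Cd T n k" by (simp add: sum_if_const dk_def t_def)
    finally show ?thesis by simp
  qed
  have E1: "(\<Sum>i<n. integral\<^sup>L (M0 n) (f1 (T n) (t n) i)) / real n = real (nk T n k) / real n * (p n * Gz Cd n True (t n))"
    if "k < Kn T n" for n
  proof -
    have "(\<Sum>i<n. integral\<^sup>L (M0 n) (f1 (T n) (t n) i)) = (\<Sum>i<n. if t n \<le> T n i then p n * Gz Cd n True (t n) else 0)"
    proof (rule sum.cong[OF refl])
      fix i assume i: "i \<in> {..<n}"
      show "integral\<^sup>L (M0 n) (f1 (T n) (t n) i) = (if t n \<le> T n i then p n * Gz Cd n True (t n) else 0)"
        unfolding M0_def using p_range[of n] tnn[OF that] T_nonneg[of i n] i Cd_prob Cd_sets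
        by (subst exp_f(2)) (auto simp: Gz_def less_imp_le)
    qed
    also have "\<dots> = real (nk T n k) * (p n * Gz Cd n True (t n))" by (simp add: sum_if_const nk_def t_def)
    finally show ?thesis by simp
  qed
  have E0: "(\<Sum>i<n. integral\<^sup>L (M0 n) (f0 (T n) (t n) i)) / real n = real (nk T n k) / real n * ((1 - p n) * Gz Cd n False (t n))"
    if "k < Kn T n" for n
  proof -
    have "(\<Sum>i<n. integral\<^sup>L (M0 n) (f0 (T n) (t n) i)) = (\<Sum>i<n. if t n \<le> T n i then (1 - p n) * Gz Cd n False (t n) else 0)"
    proof (rule sum.cong[OF refl])
      fix i assume i: "i \<in> {..<n}"
      show "integral\<^sup>L (M0 n) (f0 (T n) (t n) i) = (if t n \<le> T n i then (1 - p n) * Gz Cd n False (t n) else 0)"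
        unfolding M0_def using p_range[of n] tnn[OF that] T_nonneg[of i n] i Cd_prob Cd_sets
        by (subst exp_f(3)) (auto simp: Gz_def less_imp_le)
    qed
    also have "\<dots> = real (nk T n k) * ((1 - p n) * Gz Cd n False (t n))" by (simp add: sum_if_const nk_def t_def)
    finally show ?thesis by simp
  qed
  have cD: "cip M a (\<lambda>n. real (dk T n k) / real n * gk p Cd T n k)"
  proof -
    have "cip (\<lambda>n. PiM {..<n} (\<lambda>_. M0 n)) (\<lambda>n \<omega>. (\<Sum>i<n. fD (T n) (t n) i (\<omega> i)) / real n)
        (\<lambda>n. (\<Sum>i<n. integral\<^sup>L (M0 n) (fD (T n) (t n) i)) / real n)"
      by (rule cip_hoeff[where f="\<lambda>n i. fD (T n) (t n) i", OF M0p]) (auto simp: fD_def)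
    then have "cip M a (\<lambda>n. (\<Sum>i<n. integral\<^sup>L (M0 n) (fD (T n) (t n) i)) / real n)"
      unfolding Mfun a_eq[abs_def] .
    moreover have "eventually (\<lambda>n. (\<Sum>i<n. integral\<^sup>L (M0 n) (fD (T n) (t n) i)) / real n = real (dk T n k) / real n * gk p Cd T n k) sequentially"
      using evK by eventually_elim (rule ED)
    ultimately show ?thesis by (rule cip_center)
  qed
  have c1: "cip M b1 (\<lambda>n. real (nk T n k) / real n * (p n * Gz Cd n True (t n)))"
  proof -
    have "cip (\<lambda>n. PiM {..<n} (\<lambda>_. M0 n)) (\<lambda>n \<omega>. (\<Sum>i<n. f1 (T n) (t n) i (\<omega> i)) / real n)
        (\<lambda>n. (\<Sum>i<n. integral\<^sup>L (M0 n) (f1 (T n) (t n) i)) / real n)"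
      by (rule cip_hoeff[where f="\<lambda>n i. f1 (T n) (t n) i", OF M0p]) (auto simp: f1_def)
    then have "cip M b1 (\<lambda>n. (\<Sum>i<n. integral\<^sup>L (M0 n) (f1 (T n) (t n) i)) / real n)"
      unfolding Mfun b1_eq[abs_def] .
    moreover have "eventually (\<lambda>n. (\<Sum>i<n. integral\<^sup>L (M0 n) (f1 (T n) (t n) i)) / real n = real (nk T n k) / real n * (p n * Gz Cd n True (t n))) sequentially"
      using evK by eventually_elim (rule E1)
    ultimately show ?thesis by (rule cip_center)
  qed
  have c0: "cip M b0 (\<lambda>n. real (nk T n k) / real n * ((1 - p n) * Gz Cd n False (t n)))"
  proof -
    have "cip (\<lambda>n. PiM {..<n} (\<lambda>_. M0 n)) (\<lambda>n \<omega>. (\<Sum>i<n. f0 (T n) (t n) i (\<omega> i)) / real n)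
        (\<lambda>n. (\<Sum>i<n. integral\<^sup>L (M0 n) (f0 (T n) (t n) i)) / real n)"
      by (rule cip_hoeff[where f="\<lambda>n i. f0 (T n) (t n) i", OF M0p]) (auto simp: f0_def)
    then have "cip M b0 (\<lambda>n. (\<Sum>i<n. integral\<^sup>L (M0 n) (f0 (T n) (t n) i)) / real n)"
      unfolding Mfun b0_eq[abs_def] .
    moreover have "eventually (\<lambda>n. (\<Sum>i<n. integral\<^sup>L (M0 n) (f0 (T n) (t n) i)) / real n = real (nk T n k) / real n * ((1 - p n) * Gz Cd n False (t n))) sequentially"
      using evK by eventually_elim (rule E0)
    ultimately show ?thesis by (rule cip_center)
  qed
  have Y1': "\<And>n \<omega>. \<omega> \<in> space (M n) \<Longrightarrow> \<bar>Y n \<omega>\<bar> \<le> 1" using Y1 by blast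
  obtain P where P: "p \<longlonglongrightarrow> P" "0 < P" "P < 1" using p_lim by blast
  define Ad where "Ad = lim (\<lambda>n. real (dk T n k) / real n)"
  define \<gamma>1 where "\<gamma>1 = lim (\<lambda>n. Gz Cd n True (tpt T n k))"
  define \<gamma>0 where "\<gamma>0 = lim (\<lambda>n. Gz Cd n False (tpt T n k))"
  have dA: "(\<lambda>n. real (dk T n k) / real n) \<longlonglongrightarrow> Ad"
    unfolding Ad_def using d_lim[OF k] by (simp add: convergent_LIMSEQ_iff)
  have g1L: "(\<lambda>n. Gz Cd n True (tpt T n k)) \<longlonglongrightarrow> \<gamma>1"
    unfolding \<gamma>1_def using G1_lim[OF k] by (simp add: convergent_LIMSEQ_iff)
  have g0L: "(\<lambda>n. Gz Cd n False (tpt T n k)) \<longlonglongrightarrow> \<gamma>0"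
    unfolding \<gamma>0_def using G0_lim[OF k] by (simp add: convergent_LIMSEQ_iff)
  have Gz_nn: "0 \<le> Gz Cd n z c" for n z c unfolding Gz_def by simp
  have Gz_le1: "Gz Cd n z c \<le> 1" for n z c
  proof -
    interpret prob_space "Cd n" by (rule Cd_prob)
    show ?thesis unfolding Gz_def by simp
  qed
  have Ad0: "0 \<le> Ad" by (rule LIMSEQ_le_const[OF dA]) auto
  have g10: "0 \<le> \<gamma>1" by (rule LIMSEQ_le_const[OF g1L]) (auto simp: Gz_nn)
  have g00: "0 \<le> \<gamma>0" by (rule LIMSEQ_le_const[OF g0L]) (auto simp: Gz_nn)
  have cf: "Dk T n k \<omega> \<le> dk T n k \<and> real (N1k T n k \<omega>) + real (N0k T n k \<omega>) - real (Dk T n k \<omega>) \<le> real (nk T n k) - real (dk T n k)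
      \<and> dk T n k \<le> nk T n k \<and> nk T n k \<le> n" if "k < Kn T n" for n \<omega>
    using count_facts(1)[of T n k \<omega>] count_facts(3)[of T n k \<omega>] count_facts(4)[of T n k] count_facts(5)[of T n k]
      tnn[OF that] T_nonneg unfolding t_def by auto
  have hge: "eventually (\<lambda>n. real (dk T n k) / real n \<le> hk T n k) sequentially"
    using evK
  proof eventually_elim
    case (elim n)
    have c: "dk T n k \<le> nk T n k" "nk T n k \<le> n" using cf[OF elim] by auto
    show ?case
    proof (cases "nk T n k = 0")
      case True then show ?thesis using c by (simp add: hk_def)
    next
      case False
      then show ?thesis unfolding hk_def using c by (intro divide_left_mono) auto
    qed
  qed
  have hdiv: "hk T n k = (real (dk T n k) / real n) / (real (nk T n k) / real n)" if "0 < n" for n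
    unfolding hk_def using that by simp
  have pG1: "\<And>n. 0 \<le> p n" "\<And>n. p n \<le> 1" using p_range less_imp_le by auto
  show ?thesis
  proof (cases "lim (\<lambda>n. real (dk T n k) / real n) > 0
        \<and> lim (\<lambda>n. Gz Cd n True (tpt T n k)) > 0
        \<and> lim (\<lambda>n. Gz Cd n False (tpt T n k)) > 0
        \<and> (\<exists>l. (\<lambda>n. hk T n k) \<longlonglongrightarrow> l \<and> l < 1)")
    case True
    then have Ap: "Ad > 0" and g1p: "\<gamma>1 > 0" and g0p: "\<gamma>0 > 0" unfolding Ad_def \<gamma>1_def \<gamma>0_def by auto
    from True obtain l where hL: "(\<lambda>n. hk T n k) \<longlonglongrightarrow> l" and l1: "l < 1" by blast
    have lA: "Ad \<le> l" by (rule tendsto_le[OF sequentially_bot hL dA hge])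
    have l0: "l > 0" using lA Ap by simp
    have evd: "eventually (\<lambda>n. real (dk T n k) / real n > 0) sequentially"
      using order_tendstoD(1)[OF dA Ap] .
    have nkL: "(\<lambda>n. real (nk T n k) / real n) \<longlonglongrightarrow> Ad / l"
    proof -
      have "(\<lambda>n. (real (dk T n k) / real n) / hk T n k) \<longlonglongrightarrow> Ad / l"
        using l0 by (intro tendsto_divide dA hL) auto
      moreover have "eventually (\<lambda>n. (real (dk T n k) / real n) / hk T n k = real (nk T n k) / real n) sequentially"
        using evd evn evK
      proof eventually_elim
        case (elim n)
        have "dk T n k > 0" using elim(1) by (cases "dk T n k = 0") auto
        moreover have "dk T n k \<le> nk T n k" using cf[OF elim(3)] by auto
        ultimately show ?case using elim(2) by (simp add: hk_def field_simps)
      qed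
      ultimately show ?thesis by (rule Lim_transform_eventually)
    qed
    define \<gamma> where "\<gamma> = P * \<gamma>1 + (1 - P) * \<gamma>0"
    have gp: "\<gamma> > 0" unfolding \<gamma>_def using P g1p g0p g00 by (simp add: add_pos_nonneg)
    have gkL: "(\<lambda>n. gk p Cd T n k) \<longlonglongrightarrow> \<gamma>"
      unfolding gk_def Gmix_def \<gamma>_def by (intro tendsto_intros P g1L g0L)
    have phiL: "(\<lambda>n. phik p Cd T n k) \<longlonglongrightarrow> P * \<gamma>1 / \<gamma>"
      unfolding phik_def using gp gkL[unfolded gk_def] by (intro tendsto_intros P g1L) auto
    have aL: "(\<lambda>n. real (dk T n k) / real n * gk p Cd T n k) \<longlonglongrightarrow> Ad * \<gamma>"
      by (intro tendsto_intros dA gkL)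
    have b1L: "(\<lambda>n. real (nk T n k) / real n * (p n * Gz Cd n True (t n))) \<longlonglongrightarrow> Ad / l * (P * \<gamma>1)"
      unfolding t_def by (intro tendsto_intros nkL P g1L)
    have b0L: "(\<lambda>n. real (nk T n k) / real n * ((1 - p n) * Gz Cd n False (t n))) \<longlonglongrightarrow> Ad / l * ((1 - P) * \<gamma>0)"
      unfolding t_def by (intro tendsto_intros nkL P g0L)
    define c where "c n = gk p Cd T n k * phik p Cd T n k * (1 - phik p Cd T n k)
              * (real (nk T n k) / real n) * hk T n k * (1 - hk T n k)" for n
    have cL0: "c \<longlonglongrightarrow> \<gamma> * (P * \<gamma>1 / \<gamma>) * (1 - P * \<gamma>1 / \<gamma>) * (Ad / l) * l * (1 - l)"
      unfolding c_def[abs_def] by (intro tendsto_intros gkL phiL nkL hL)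
    have FFeq: "\<gamma> * (P * \<gamma>1 / \<gamma>) * (1 - P * \<gamma>1 / \<gamma>) * (Ad / l) * l * (1 - l)
        = FF (Ad * \<gamma>) (Ad / l * (P * \<gamma>1)) (Ad / l * ((1 - P) * \<gamma>0)) 0"
      by (rule FFeq) (use gp l0 Ap in \<open>auto simp: \<gamma>_def\<close>)
    have pos: "Ad / l * (P * \<gamma>1) + Ad / l * ((1 - P) * \<gamma>0) \<noteq> 0"
    proof -
      have "Ad / l * (P * \<gamma>1) + Ad / l * ((1 - P) * \<gamma>0) = Ad / l * \<gamma>" unfolding \<gamma>_def by (simp add: algebra_simps)
      then show ?thesis using Ap l0 gp by simp
    qed
    have ci: "cip M Y c"
    proof (rule cip3[OF ma mb1 mb0 mY Mp cD c1 c0])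
      fix \<epsilon> :: real assume e: "\<epsilon> > 0"
      obtain \<delta> where d: "\<delta> > 0" and evF: "eventually (\<lambda>n. \<forall>x y z. \<bar>x - real (dk T n k) / real n * gk p Cd T n k\<bar> \<le> \<delta>
          \<longrightarrow> \<bar>y - real (nk T n k) / real n * (p n * Gz Cd n True (t n))\<bar> \<le> \<delta>
          \<longrightarrow> \<bar>z - real (nk T n k) / real n * ((1 - p n) * Gz Cd n False (t n))\<bar> \<le> \<delta>
          \<longrightarrow> \<bar>FF x y z (1 / real n) - c n\<bar> \<le> \<epsilon>) sequentially"
        using FF_key[OF pos aL b1L b0L cL0[unfolded FFeq] e] by blast
      show "\<exists>\<delta>>0. eventually (\<lambda>n. \<forall>\<omega>\<in>space (M n). \<bar>Y n \<omega> - c n\<bar> > \<epsilon> \<longrightarrow>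
          (\<bar>a n \<omega> - real (dk T n k) / real n * gk p Cd T n k\<bar> > \<delta>
          \<or> \<bar>b1 n \<omega> - real (nk T n k) / real n * (p n * Gz Cd n True (t n))\<bar> > \<delta>
          \<or> \<bar>b0 n \<omega> - real (nk T n k) / real n * ((1 - p n) * Gz Cd n False (t n))\<bar> > \<delta>)) sequentially"
      proof (intro exI[of _ \<delta>] conjI d)
        show "eventually (\<lambda>n. \<forall>\<omega>\<in>space (M n). \<bar>Y n \<omega> - c n\<bar> > \<epsilon> \<longrightarrow>
          (\<bar>a n \<omega> - real (dk T n k) / real n * gk p Cd T n k\<bar> > \<delta>
          \<or> \<bar>b1 n \<omega> - real (nk T n k) / real n * (p n * Gz Cd n True (t n))\<bar> > \<delta>
          \<or> \<bar>b0 n \<omega> - real (nk T n k) / real n * ((1 - p n) * Gz Cd n False (t n))\<bar> > \<delta>)) sequentially"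
          using evF evn
        proof eventually_elim
          case (elim n)
          show ?case
          proof (intro ballI impI)
            fix \<omega> assume big: "\<bar>Y n \<omega> - c n\<bar> > \<epsilon>"
            show "\<bar>a n \<omega> - real (dk T n k) / real n * gk p Cd T n k\<bar> > \<delta>
              \<or> \<bar>b1 n \<omega> - real (nk T n k) / real n * (p n * Gz Cd n True (t n))\<bar> > \<delta>
              \<or> \<bar>b0 n \<omega> - real (nk T n k) / real n * ((1 - p n) * Gz Cd n False (t n))\<bar> > \<delta>"
            proof (rule ccontr)
              assume "\<not> ?thesis"
              then have "\<bar>FF (a n \<omega>) (b1 n \<omega>) (b0 n \<omega>) (1 / real n) - c n\<bar> \<le> \<epsilon>"
                using elim(1) by auto
              then show False using big Y_FF[OF elim(2)] by simp
            qed
          qed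
        qed
      qed
    qed
    have cB: "Bseq c" using cL0 by (intro convergent_imp_Bseq convergentI)
    note fin = finish[OF mY Mp Y1' cB ci]
    have r1: "(\<lambda>n. prob_space.expectation (popM p Cd n) (Vk T n k) / real n
            - gk p Cd T n k * phik p Cd T n k * (1 - phik p Cd T n k)
              * (real (nk T n k) / real n) * hk T n k * (1 - hk T n k)) \<longlonglongrightarrow> 0"
      using fin(1) unfolding EY c_def .
    have r2: "\<forall>\<epsilon>>0. (\<lambda>n. measure (popM p Cd n)
              {\<omega> \<in> space (popM p Cd n).
                 \<bar>Vk T n k \<omega> / real n
                  - prob_space.expectation (popM p Cd n) (Vk T n k) / real n\<bar> > \<epsilon>})
            \<longlonglongrightarrow> 0"
      using fin(2) unfolding cip_def EY unfolding M_def Y_def .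
    show ?thesis by (subst if_P[OF True]) (rule conjI[OF r1 r2])
  next
    case False
    have ci: "cip M Y (\<lambda>_. 0)"
    proof -
      consider (a) "\<not> lim (\<lambda>n. real (dk T n k) / real n) > 0"
        | (b) "\<not> lim (\<lambda>n. Gz Cd n True (tpt T n k)) > 0"
        | (c) "\<not> lim (\<lambda>n. Gz Cd n False (tpt T n k)) > 0"
        | (d) "lim (\<lambda>n. real (dk T n k) / real n) > 0" "\<not> (\<exists>l. (\<lambda>n. hk T n k) \<longlonglongrightarrow> l \<and> l < 1)"
        using False by blast
      then show ?thesis
      proof cases
        case a
        then have "Ad = 0" using Ad0 unfolding Ad_def by simp
        then have dA0: "(\<lambda>n. real (dk T n k) / real n) \<longlonglongrightarrow> 0" using dA by simp
        show ?thesis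
        proof (rule cip_det[OF _ dA0])
          show "eventually (\<lambda>n. \<forall>\<omega>\<in>space (M n). \<bar>Y n \<omega> - 0\<bar> \<le> real (dk T n k) / real n) sequentially"
            using evK
          proof eventually_elim
            case (elim n)
            show ?case
            proof
              fix \<omega>
              have "Dk T n k \<omega> \<le> dk T n k" using cf[OF elim] by auto
              then have "a n \<omega> \<le> real (dk T n k) / real n" unfolding a_def by (simp add: divide_right_mono)
              then show "\<bar>Y n \<omega> - 0\<bar> \<le> real (dk T n k) / real n" using Y0[of n \<omega>] Ya[of n \<omega>] by simp
            qed
          qed
        qed
      next
        case b
        then have "\<gamma>1 = 0" using g10 unfolding \<gamma>1_def by simp
        then have gz: "(\<lambda>n. Gz Cd n True (tpt T n k)) \<longlonglongrightarrow> 0" using g1L by simp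
        have bz: "(\<lambda>n. real (nk T n k) / real n * (p n * Gz Cd n True (t n))) \<longlonglongrightarrow> 0"
        proof (rule tendsto_sandwich[OF _ _ tendsto_const gz])
          show "eventually (\<lambda>n. 0 \<le> real (nk T n k) / real n * (p n * Gz Cd n True (t n))) sequentially"
            using pG1 Gz_nn by (auto intro!: always_eventually)
          show "eventually (\<lambda>n. real (nk T n k) / real n * (p n * Gz Cd n True (t n)) \<le> Gz Cd n True (tpt T n k)) sequentially"
            using evK
          proof eventually_elim
            case (elim n)
            have "real (nk T n k) / real n \<le> 1" using cf[OF elim] by (cases "n = 0") auto
            moreover have "p n * Gz Cd n True (t n) \<le> Gz Cd n True (t n)"
              using pG1[of n] Gz_nn[of n True "t n"] by (simp add: mult_left_le_one_le)
            ultimately have "real (nk T n k) / real n * (p n * Gz Cd n True (t n)) \<le> 1 * Gz Cd n True (t n)"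
              using pG1[of n] Gz_nn[of n True "t n"] by (intro mult_mono) auto
            then show ?case by (simp add: t_def)
          qed
        qed
        show ?thesis
        proof (rule cip3[OF mb1 mb1 mb1 mY Mp c1 c1 c1])
          fix \<epsilon> :: real assume e: "\<epsilon> > 0"
          have "eventually (\<lambda>n. \<bar>real (nk T n k) / real n * (p n * Gz Cd n True (t n)) - 0\<bar> < \<epsilon>/2) sequentially"
            using tendstoD[OF bz, of "\<epsilon>/2"] e by (simp add: dist_real_def)
          then have "eventually (\<lambda>n. \<forall>\<omega>\<in>space (M n). \<bar>Y n \<omega> - 0\<bar> > \<epsilon> \<longrightarrow>
              (\<bar>b1 n \<omega> - real (nk T n k) / real n * (p n * Gz Cd n True (t n))\<bar> > \<epsilon>/2
              \<or> \<bar>b1 n \<omega> - real (nk T n k) / real n * (p n * Gz Cd n True (t n))\<bar> > \<epsilon>/2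
              \<or> \<bar>b1 n \<omega> - real (nk T n k) / real n * (p n * Gz Cd n True (t n))\<bar> > \<epsilon>/2)) sequentially"
          proof eventually_elim
            case (elim n)
            show ?case
            proof (intro ballI impI)
              fix \<omega> assume "\<bar>Y n \<omega> - 0\<bar> > \<epsilon>"
              then have "b1 n \<omega> > \<epsilon>" using Y0[of n \<omega>] Yb1[of n \<omega>] by simp
              then have "\<bar>b1 n \<omega> - real (nk T n k) / real n * (p n * Gz Cd n True (t n))\<bar> > \<epsilon>/2"
                using elim unfolding abs_less_iff by (simp add: abs_if)
              then show "\<bar>b1 n \<omega> - real (nk T n k) / real n * (p n * Gz Cd n True (t n))\<bar> > \<epsilon>/2
              \<or> \<bar>b1 n \<omega> - real (nk T n k) / real n * (p n * Gz Cd n True (t n))\<bar> > \<epsilon>/2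
              \<or> \<bar>b1 n \<omega> - real (nk T n k) / real n * (p n * Gz Cd n True (t n))\<bar> > \<epsilon>/2" by simp
            qed
          qed
          then show "\<exists>\<delta>>0. eventually (\<lambda>n. \<forall>\<omega>\<in>space (M n). \<bar>Y n \<omega> - 0\<bar> > \<epsilon> \<longrightarrow>
              (\<bar>b1 n \<omega> - real (nk T n k) / real n * (p n * Gz Cd n True (t n))\<bar> > \<delta>
              \<or> \<bar>b1 n \<omega> - real (nk T n k) / real n * (p n * Gz Cd n True (t n))\<bar> > \<delta>
              \<or> \<bar>b1 n \<omega> - real (nk T n k) / real n * (p n * Gz Cd n True (t n))\<bar> > \<delta>)) sequentially"
            using e by (intro exI[of _ "\<epsilon>/2"]) auto
        qed
      next
        case c
        then have "\<gamma>0 = 0" using g00 unfolding \<gamma>0_def by simp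
        then have gz: "(\<lambda>n. Gz Cd n False (tpt T n k)) \<longlonglongrightarrow> 0" using g0L by simp
        have bz: "(\<lambda>n. real (nk T n k) / real n * ((1 - p n) * Gz Cd n False (t n))) \<longlonglongrightarrow> 0"
        proof (rule tendsto_sandwich[OF _ _ tendsto_const gz])
          show "eventually (\<lambda>n. 0 \<le> real (nk T n k) / real n * ((1 - p n) * Gz Cd n False (t n))) sequentially"
            using pG1 Gz_nn by (auto intro!: always_eventually)
          show "eventually (\<lambda>n. real (nk T n k) / real n * ((1 - p n) * Gz Cd n False (t n)) \<le> Gz Cd n False (tpt T n k)) sequentially"
            using evK
          proof eventually_elim
            case (elim n)
            have "real (nk T n k) / real n \<le> 1" using cf[OF elim] by (cases "n = 0") auto
            moreover have "(1 - p n) * Gz Cd n False (t n) \<le> Gz Cd n False (t n)"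
              using pG1[of n] Gz_nn[of n False "t n"] by (simp add: mult_left_le_one_le)
            ultimately have "real (nk T n k) / real n * ((1 - p n) * Gz Cd n False (t n)) \<le> 1 * Gz Cd n False (t n)"
              using pG1[of n] Gz_nn[of n False "t n"] by (intro mult_mono) auto
            then show ?case by (simp add: t_def)
          qed
        qed
        show ?thesis
        proof (rule cip3[OF mb0 mb0 mb0 mY Mp c0 c0 c0])
          fix \<epsilon> :: real assume e: "\<epsilon> > 0"
          have "eventually (\<lambda>n. \<bar>real (nk T n k) / real n * ((1 - p n) * Gz Cd n False (t n)) - 0\<bar> < \<epsilon>/2) sequentially"
            using tendstoD[OF bz, of "\<epsilon>/2"] e by (simp add: dist_real_def)
          then have "eventually (\<lambda>n. \<forall>\<omega>\<in>space (M n). \<bar>Y n \<omega> - 0\<bar> > \<epsilon> \<longrightarrow>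
              (\<bar>b0 n \<omega> - real (nk T n k) / real n * ((1 - p n) * Gz Cd n False (t n))\<bar> > \<epsilon>/2
              \<or> \<bar>b0 n \<omega> - real (nk T n k) / real n * ((1 - p n) * Gz Cd n False (t n))\<bar> > \<epsilon>/2
              \<or> \<bar>b0 n \<omega> - real (nk T n k) / real n * ((1 - p n) * Gz Cd n False (t n))\<bar> > \<epsilon>/2)) sequentially"
          proof eventually_elim
            case (elim n)
            show ?case
            proof (intro ballI impI)
              fix \<omega> assume "\<bar>Y n \<omega> - 0\<bar> > \<epsilon>"
              then have "b0 n \<omega> > \<epsilon>" using Y0[of n \<omega>] Yb0[of n \<omega>] by simp
              then have "\<bar>b0 n \<omega> - real (nk T n k) / real n * ((1 - p n) * Gz Cd n False (t n))\<bar> > \<epsilon>/2"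
                using elim unfolding abs_less_iff by (simp add: abs_if)
              then show "\<bar>b0 n \<omega> - real (nk T n k) / real n * ((1 - p n) * Gz Cd n False (t n))\<bar> > \<epsilon>/2
              \<or> \<bar>b0 n \<omega> - real (nk T n k) / real n * ((1 - p n) * Gz Cd n False (t n))\<bar> > \<epsilon>/2
              \<or> \<bar>b0 n \<omega> - real (nk T n k) / real n * ((1 - p n) * Gz Cd n False (t n))\<bar> > \<epsilon>/2" by simp
            qed
          qed
          then show "\<exists>\<delta>>0. eventually (\<lambda>n. \<forall>\<omega>\<in>space (M n). \<bar>Y n \<omega> - 0\<bar> > \<epsilon> \<longrightarrow>
              (\<bar>b0 n \<omega> - real (nk T n k) / real n * ((1 - p n) * Gz Cd n False (t n))\<bar> > \<delta>
              \<or> \<bar>b0 n \<omega> - real (nk T n k) / real n * ((1 - p n) * Gz Cd n False (t n))\<bar> > \<delta>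
              \<or> \<bar>b0 n \<omega> - real (nk T n k) / real n * ((1 - p n) * Gz Cd n False (t n))\<bar> > \<delta>)) sequentially"
            using e by (intro exI[of _ "\<epsilon>/2"]) auto
        qed
      next
        case d
        then have Ap: "Ad > 0" unfolding Ad_def by simp
        define \<nu> where "\<nu> = (\<Sum>j\<in>{k..<K}. lim (\<lambda>n. real (dk T n j) / real n))"
        have nkL: "(\<lambda>n. real (nk T n k) / real n) \<longlonglongrightarrow> \<nu>"
        proof -
          have "(\<lambda>n. \<Sum>j\<in>{k..<K}. real (dk T n j) / real n) \<longlonglongrightarrow> \<nu>"
            unfolding \<nu>_def
          proof (rule tendsto_sum)
            fix j assume "j \<in> {k..<K}"
            then have "j < K" by simp
            then show "(\<lambda>n. real (dk T n j) / real n) \<longlonglongrightarrow> lim (\<lambda>n. real (dk T n j) / real n)"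
              using d_lim by (simp add: convergent_LIMSEQ_iff)
          qed
          moreover have "eventually (\<lambda>n. (\<Sum>j\<in>{k..<K}. real (dk T n j) / real n) = real (nk T n k) / real n) sequentially"
            using K_fixed
          proof eventually_elim
            case (elim n)
            have "nk T n k = (\<Sum>j\<in>{k..<K}. dk T n j)" using nk_sum[of k T n] elim k by simp
            then show ?case by (simp add: sum_divide_distrib)
          qed
          ultimately show ?thesis by (rule Lim_transform_eventually)
        qed
        have nuA: "Ad \<le> \<nu>"
        proof (rule tendsto_le[OF sequentially_bot nkL dA])
          show "eventually (\<lambda>n. real (dk T n k) / real n \<le> real (nk T n k) / real n) sequentially"
            using evK by eventually_elim (use cf in \<open>auto intro: divide_right_mono\<close>)
        qed
        have nup: "\<nu> > 0" using nuA Ap by simp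
        have hL: "(\<lambda>n. hk T n k) \<longlonglongrightarrow> Ad / \<nu>"
        proof -
          have "(\<lambda>n. (real (dk T n k) / real n) / (real (nk T n k) / real n)) \<longlonglongrightarrow> Ad / \<nu>"
            using nup by (intro tendsto_divide dA nkL) auto
          moreover have "eventually (\<lambda>n. (real (dk T n k) / real n) / (real (nk T n k) / real n) = hk T n k) sequentially"
            using evn by eventually_elim (simp add: hdiv)
          ultimately show ?thesis by (rule Lim_transform_eventually)
        qed
        have "\<not> Ad / \<nu> < 1" using d(2) hL by blast
        then have "\<nu> \<le> Ad" using nup by (simp add: field_simps)
        then have eq: "\<nu> = Ad" using nuA by simp
        have eL: "(\<lambda>n. real (nk T n k) / real n - real (dk T n k) / real n) \<longlonglongrightarrow> 0"
          using tendsto_diff[OF nkL dA] eq by simp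
        show ?thesis
        proof (rule cip_det[OF _ eL])
          show "eventually (\<lambda>n. \<forall>\<omega>\<in>space (M n). \<bar>Y n \<omega> - 0\<bar> \<le> real (nk T n k) / real n - real (dk T n k) / real n) sequentially"
            using evK
          proof eventually_elim
            case (elim n)
            show ?case
            proof
              fix \<omega>
              have "real (N1k T n k \<omega>) + real (N0k T n k \<omega>) - real (Dk T n k \<omega>) \<le> real (nk T n k) - real (dk T n k)"
                using cf[OF elim] by auto
              then have "(real (N1k T n k \<omega>) + real (N0k T n k \<omega>) - real (Dk T n k \<omega>)) / real n
                  \<le> (real (nk T n k) - real (dk T n k)) / real n" by (simp add: divide_right_mono)
              then show "\<bar>Y n \<omega> - 0\<bar> \<le> real (nk T n k) / real n - real (dk T n k) / real n"
                using Y0[of n \<omega>] YND[of n \<omega>] by (simp add: diff_divide_distrib)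
            qed
          qed
        qed
      qed
    qed
    have cB: "Bseq (\<lambda>_. 0::real)" by simp
    note fin = finish[OF mY Mp Y1' cB ci]
    have r1: "(\<lambda>n. prob_space.expectation (popM p Cd n) (Vk T n k) / real n) \<longlonglongrightarrow> 0"
      using fin(1) unfolding EY by simp
    have r2: "\<forall>\<epsilon>>0. (\<lambda>n. measure (popM p Cd n)
              {\<omega> \<in> space (popM p Cd n). \<bar>Vk T n k \<omega> / real n\<bar> > \<epsilon>}) \<longlonglongrightarrow> 0"
      using ci unfolding cip_def M_def Y_def by simp
    show ?thesis by (subst if_not_P[OF False]) (rule conjI[OF r1 r2])
  qed
qed
done



end
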